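(* Under Assumptions 2.1 and 2.2 (see context), for every $T>0$, every $x\in\mathbb{R}^d$ and every $h\in L^2([0,T];\mathbb{R}^m)$, the skeleton equation $$\frac{d}{dt}X^h_x(t)=b(X^h_x(t))+\sigma(X^h_x(t))h(t),\qquad X^h_x(0)=x,$$ has a unique solution $X^h_x\in C([0,T];\mathbb{R}^d)$.
   Context: $b:\mathbb{R}^d\to\mathbb{R}^d$, $\sigma:\mathbb{R}^d\to\mathbb{R}^d\otimes\mathbb{R}^m$ continuous. Assumption 2.1: there is $\varepsilon_0\in(0,1)$ such that for every $R>0$ there is $L_R>0$ with $2\langle x-y,b(x)-b(y)\rangle+\|\sigma(x)-\sigma(y)\|^2\le L_R|x-y|^2$ whenever $|x|\vee|y|\le R$, $|x-y|\le\varepsilon_0$ ($\|\cdot\|$ the Hilbert–Schmidt norm). Assumption 2.2: there exist $V\in C^2(\mathbb{R}^d;\mathbb{R}_+)$ and constants $\theta,\eta,C,M>0$ with $\lim_{|x|\to\infty}V(x)=\infty$, $\langle b,\nabla V\rangle+\frac{\theta}{2}\mathrm{Trace}(\sigma^*\nabla^2V\sigma)+\frac{|\sigma^*\nabla V|^2}{\eta V}\le C(1+V)$ and $\mathrm{Trace}(\sigma^*\nabla^2V\sigma)\ge -M-CV$ on $\mathbb{R}^d$. *)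

theory Defs
  imports "HOL-Analysis.Analysis"
begin

text \<open>The diffusion coefficient sigma(x) is a d x m matrix, represented as real^'m^'d;
  the norm on this type is the Hilbert-Schmidt (Frobenius) norm.\<close>
definition assumption_2_1 ::
  "(real^'d \<Rightarrow> real^'d) \<Rightarrow> (real^'d \<Rightarrow> real^'m^'d) \<Rightarrow> bool" where
  "assumption_2_1 b \<sigma> \<longleftrightarrow>
    (\<exists>\<epsilon>0. 0 < \<epsilon>0 \<and> \<epsilon>0 < 1 \<and>
      (\<forall>R>0. \<exists>L>0. \<forall>x y. max (norm x) (norm y) \<le> R \<and> norm (x - y) \<le> \<epsilon>0 \<longrightarrow>
          2 * ((x - y) \<bullet> (b x - b y)) + (norm (\<sigma> x - \<sigma> y))\<^sup>2 \<le> L * (norm (x - y))\<^sup>2))"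

definition C2_with_grad_hess ::
  "(real^'d \<Rightarrow> real) \<Rightarrow> (real^'d \<Rightarrow> real^'d) \<Rightarrow> (real^'d \<Rightarrow> real^'d^'d) \<Rightarrow> bool" where
  "C2_with_grad_hess V gV HV \<longleftrightarrow>
    (\<forall>x. (V has_derivative (\<lambda>v. gV x \<bullet> v)) (at x)) \<and>
    (\<forall>x. (gV has_derivative (\<lambda>v. HV x *v v)) (at x)) \<and>
    continuous_on UNIV HV"

definition assumption_2_2 ::
  "(real^'d \<Rightarrow> real^'d) \<Rightarrow> (real^'d \<Rightarrow> real^'m^'d) \<Rightarrow> bool" where
  "assumption_2_2 b \<sigma> \<longleftrightarrow>
    (\<exists>V gV HV \<theta> \<eta> C M.
      C2_with_grad_hess V gV HV \<and> (\<forall>x. 0 \<le> V x) \<and>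
      0 < \<theta> \<and> 0 < \<eta> \<and> 0 < C \<and> 0 < M \<and>
      filterlim V at_top at_infinity \<and>
      (\<forall>x. b x \<bullet> gV x + \<theta> / 2 * trace (transpose (\<sigma> x) ** HV x ** \<sigma> x)
             + (norm (transpose (\<sigma> x) *v gV x))\<^sup>2 / (\<eta> * V x) \<le> C * (1 + V x)) \<and>
      (\<forall>x. trace (transpose (\<sigma> x) ** HV x ** \<sigma> x) \<ge> - M - C * V x))"

definition L2_on :: "real \<Rightarrow> (real \<Rightarrow> real^'m) \<Rightarrow> bool" where
  "L2_on T h \<longleftrightarrow> set_borel_measurable lebesgue {0..T} h \<and>
     set_integrable lebesgue {0..T} (\<lambda>t. (norm (h t))\<^sup>2)"

definition skeleton_solution ::
  "(real^'d \<Rightarrow> real^'d) \<Rightarrow> (real^'d \<Rightarrow> real^'m^'d) \<Rightarrow> (real \<Rightarrow> real^'m) \<Rightarrow> real^'d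
     \<Rightarrow> real \<Rightarrow> (real \<Rightarrow> real^'d) \<Rightarrow> bool" where
  "skeleton_solution b \<sigma> h x T X \<longleftrightarrow>
     continuous_on {0..T} X \<and>
     (\<forall>t\<in>{0..T}. set_integrable lebesgue {0..t} (\<lambda>s. b (X s) + \<sigma> (X s) *v h s) \<and>
        X t = x + (LINT s:{0..t}|lebesgue. b (X s) + \<sigma> (X s) *v h s))"

end

theory Submission
  imports Defs "HOL-Complex_Analysis.Great_Picard"
begin
lemma norm_mat_vec_le:
  fixes A :: "real^'m^'d" and v :: "real^'m"
  shows "norm (A *v v) \<le> norm A * norm v"
proof -
  have e: "(A *v v) $ i = (A $ i) \<bullet> v" for i
    by (simp add: matrix_vector_mult_def inner_vec_def mult.commute)
  have "(norm (A *v v))\<^sup>2 = (\<Sum>i\<in>UNIV. ((A *v v) $ i)\<^sup>2)"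
    by (simp add: norm_vec_def L2_set_def sum_nonneg)
  also have "\<dots> = (\<Sum>i\<in>UNIV. ((A $ i) \<bullet> v)\<^sup>2)"
    using e by simp
  also have "\<dots> \<le> (\<Sum>i\<in>UNIV. (norm (A $ i))\<^sup>2 * (norm v)\<^sup>2)"
  proof (intro sum_mono)
    fix i
    have "\<bar>(A $ i) \<bullet> v\<bar> \<le> norm (A $ i) * norm v" by (rule Cauchy_Schwarz_ineq2)
    then have "\<bar>(A $ i) \<bullet> v\<bar>\<^sup>2 \<le> (norm (A $ i) * norm v)\<^sup>2"
      by (intro power_mono) auto
    then show "((A $ i) \<bullet> v)\<^sup>2 \<le> (norm (A $ i))\<^sup>2 * (norm v)\<^sup>2"
      by (simp add: power_mult_distrib)
  qed
  also have "\<dots> = (norm A * norm v)\<^sup>2"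
    by (simp add: norm_vec_def L2_set_def power_mult_distrib sum_distrib_right sum_nonneg)
  finally show ?thesis
    by (meson norm_ge_zero power2_le_imp_le zero_le_mult_iff)
qed

lemma zero_if_small:
  fixes z c :: real
  assumes "c \<ge> 0" "\<And>e. e > 0 \<Longrightarrow> \<bar>z\<bar> \<le> e * c"
  shows "z = 0"
proof (rule ccontr)
  assume "z \<noteq> 0"
  then have p: "\<bar>z\<bar> > 0" by simp
  have "\<bar>z\<bar> \<le> (\<bar>z\<bar> / (2 * (c + 1))) * c"
    using assms(2)[of "\<bar>z\<bar> / (2 * (c + 1))"] p assms(1) by simp
  also have "\<dots> = \<bar>z\<bar> * (c / (2 * (c + 1)))"
    by simp
  also have "\<dots> < \<bar>z\<bar> * 1"
  proof (intro mult_strict_left_mono p)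
    have "c < 2 * (c + 1)" using assms(1) by simp
    then show "c / (2 * (c + 1)) < 1" using assms(1) by (simp add: divide_less_eq)
  qed
  also have "\<dots> = \<bar>z\<bar>" by simp
  finally show False by simp
qed

lemma abs_int_sub:
  fixes g :: "real \<Rightarrow> 'a::euclidean_space"
  assumes "g absolutely_integrable_on {a..b}" "{c..d} \<subseteq> {a..b}"
  shows "g absolutely_integrable_on {c..d}"
  using set_integrable_subset[OF assms(1) _ assms(2)] by simp

lemma abs_int_integrable:
  fixes g :: "real \<Rightarrow> 'a::euclidean_space"
  assumes "g absolutely_integrable_on S"
  shows "g integrable_on S" "(\<lambda>x. norm (g x)) integrable_on S"
  using assms absolutely_integrable_on_def by auto

lemma chain_rule_AC:
  fixes F :: "'a::euclidean_space \<Rightarrow> real" and G :: "'a \<Rightarrow> 'a" and g :: "real \<Rightarrow> 'a"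
  assumes F: "\<And>y. (F has_derivative (\<lambda>v. G y \<bullet> v)) (at y)"
    and G: "continuous_on UNIV G"
    and g: "g absolutely_integrable_on {a..b}"
    and t: "t \<in> {a..b}"
  shows "(\<lambda>s. G (x + integral {a..s} g) \<bullet> g s) absolutely_integrable_on {a..t}"
    and "F (x + integral {a..t} g) = F x + integral {a..t} (\<lambda>s. G (x + integral {a..s} g) \<bullet> g s)"
proof -
  define D where "D s = x + integral {a..s} g" for s
  define Hi where "Hi s = G (D s) \<bullet> g s" for s
  define m where "m s = norm (g s)" for s
  define M where "M u = integral {a..u} m" for u
  have gi: "g integrable_on {a..b}" and mi: "m integrable_on {a..b}"
    using abs_int_integrable[OF g] by (auto simp: m_def[abs_def])
  have Dc: "continuous_on {a..b} D"
    unfolding D_def[abs_def] by (intro continuous_intros indefinite_integral_continuous_1 gi)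
  have Hint: "Hi absolutely_integrable_on {a..u}" if "u \<in> {a..b}" for u
  proof -
    have cu: "continuous_on {a..u} (G \<circ> D)"
      using that by (intro continuous_on_compose continuous_on_subset[OF Dc] continuous_on_subset[OF G]) auto
    have "(\<lambda>s. (G \<circ> D) s \<bullet> g s) absolutely_integrable_on {a..u}"
    proof (rule absolutely_integrable_bounded_measurable_product[where h = inner])
      show "bilinear (\<bullet>)" unfolding bilinear_def by (auto intro: bounded_linear.linear bounded_linear_inner_left bounded_linear_inner_right)
      show "G \<circ> D \<in> borel_measurable (lebesgue_on {a..u})"
        by (rule continuous_imp_measurable_on_sets_lebesgue[OF cu]) auto
      show "bounded ((G \<circ> D) ` {a..u})"
        by (intro compact_imp_bounded compact_continuous_image cu) auto
      show "g absolutely_integrable_on {a..u}"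
        using abs_int_sub[OF g] that by auto
    qed auto
    then show ?thesis by (simp add: Hi_def[abs_def])
  qed
  then show "(\<lambda>s. G (x + integral {a..s} g) \<bullet> g s) absolutely_integrable_on {a..t}"
    using t by (simp add: Hi_def[abs_def] D_def[abs_def])
  have Hii: "Hi integrable_on {a..u}" if "u \<in> {a..b}" for u
    using abs_int_integrable(1)[OF Hint[OF that]] .
  define Phi where "Phi u = F (D u) - integral {a..u} Hi" for u
  have Da: "D a = x" by (simp add: D_def[abs_def])
  have Ma: "M a = 0" by (simp add: M_def[abs_def])
  have Phia: "Phi a = F x" by (simp add: Phi_def[abs_def] Da)
  have Mmono: "M s \<le> M u" if "a \<le> s" "s \<le> u" "u \<le> b" for s u
  proof -
    have "M s + integral {s..u} m = M u"
      unfolding M_def[abs_def] using that by (intro Henstock_Kurzweil_Integration.integral_combine integrable_on_subinterval[OF mi]) auto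
    moreover have "integral {s..u} m \<ge> 0"
      by (intro integral_nonneg integrable_on_subinterval[OF mi]) (use that in \<open>auto simp: m_def[abs_def]\<close>)
    ultimately show ?thesis by linarith
  qed
  have Mnn: "M u \<ge> 0" if "u \<in> {a..b}" for u
    using Mmono[of a u] that Ma by auto
  have main: "\<bar>Phi t - F x\<bar> \<le> e * (2 * M t)" if e: "e > 0" for e
  proof -
    have "compact (D ` {a..b})" by (intro compact_continuous_image Dc) auto
    then obtain r where r: "\<And>s. s \<in> {a..b} \<Longrightarrow> norm (D s) \<le> r"
      by (meson bounded_iff compact_imp_bounded image_eqI)
    have "uniformly_continuous_on (cball 0 r) G"
      by (intro compact_uniformly_continuous continuous_on_subset[OF G]) auto
    then obtain \<rho> where \<rho>: "\<rho> > 0" and \<rho>G: "\<And>y z. y \<in> cball 0 r \<Longrightarrow> z \<in> cball 0 r \<Longrightarrow> dist z y < \<rho> \<Longrightarrow> dist (G z) (G y) < e"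
      unfolding uniformly_continuous_on_def using e by metis
    have "uniformly_continuous_on {a..b} D"
      by (intro compact_uniformly_continuous Dc) auto
    then obtain \<delta> where \<delta>: "\<delta> > 0" and \<delta>D: "\<And>s s'. s \<in> {a..b} \<Longrightarrow> s' \<in> {a..b} \<Longrightarrow> dist s' s < \<delta> \<Longrightarrow> dist (D s') (D s) < \<rho>"
      unfolding uniformly_continuous_on_def using \<rho> by metis
    have LC: "\<bar>Phi u - Phi s\<bar> \<le> 2 * e * (M u - M s)"
      if su: "a \<le> s" "s \<le> u" "u \<le> b" "u - s < \<delta>" for s u
    proof -
      have sab: "s \<in> {a..b}" and uab: "u \<in> {a..b}" using su by auto
      have gsu: "g integrable_on {s..u}" using su by (intro integrable_on_subinterval[OF gi]) auto
      have msu: "m integrable_on {s..u}" using su by (intro integrable_on_subinterval[OF mi]) auto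
      have Hsu: "Hi integrable_on {s..u}" using su by (intro integrable_on_subinterval[OF Hii[OF uab]]) auto
      have DuDs: "D u - D s = integral {s..u} g"
      proof -
        have "integral {a..s} g + integral {s..u} g = integral {a..u} g"
          using su by (intro Henstock_Kurzweil_Integration.integral_combine integrable_on_subinterval[OF gi]) auto
        then show ?thesis by (simp add: D_def[abs_def] algebra_simps)
      qed
      have HuHs: "integral {a..u} Hi - integral {a..s} Hi = integral {s..u} Hi"
      proof -
        have "integral {a..s} Hi + integral {s..u} Hi = integral {a..u} Hi"
          using su by (intro Henstock_Kurzweil_Integration.integral_combine Hii[OF uab]) auto
        then show ?thesis by (simp add: algebra_simps)
      qed
      have MuMs: "M u - M s = integral {s..u} m"
      proof -
        have "integral {a..s} m + integral {s..u} m = integral {a..u} m"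
          using su by (intro Henstock_Kurzweil_Integration.integral_combine integrable_on_subinterval[OF mi]) auto
        then show ?thesis by (simp add: M_def[abs_def] algebra_simps)
      qed
      have normD: "norm (D u - D s) \<le> M u - M s"
        unfolding DuDs MuMs
        by (rule integral_norm_bound_integral[OF gsu msu]) (simp add: m_def[abs_def])
      have inball: "D r' \<in> cball 0 r" if "r' \<in> {a..b}" for r'
        using r[OF that] by simp
      have close: "dist (D r') (D s) < \<rho>" if "r' \<in> {s..u}" for r'
        using that su by (intro \<delta>D) (auto simp: dist_real_def)
      have MV: "norm ((F (D u) - G (D s) \<bullet> D u) - (F (D s) - G (D s) \<bullet> D s)) \<le> e * norm (D u - D s)"
      proof (rule differentiable_bound[where S = "closed_segment (D s) (D u)"
            and f' = "\<lambda>y v. (G y - G (D s)) \<bullet> v"])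
        show "convex (closed_segment (D s) (D u))" by simp
        show "((\<lambda>y. F y - G (D s) \<bullet> y) has_derivative (\<lambda>v. (G y - G (D s)) \<bullet> v))
                (at y within closed_segment (D s) (D u))" for y
        proof -
          have "((\<lambda>y. F y - G (D s) \<bullet> y) has_derivative (\<lambda>v. G y \<bullet> v - G (D s) \<bullet> v)) (at y)"
            by (intro derivative_intros F)
          then show ?thesis
            by (simp add: inner_diff_left has_derivative_at_withinI)
        qed
        show "onorm (\<lambda>v. (G y - G (D s)) \<bullet> v) \<le> e" if y: "y \<in> closed_segment (D s) (D u)" for y
        proof -
          have yb: "y \<in> cball 0 r"
            using y closed_segment_subset[OF inball[OF sab] inball[OF uab] convex_cball] by auto
          have "dist y (D s) \<le> dist (D s) (D u)" using dist_in_closed_segment[OF y] by simp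
          also have "\<dots> < \<rho>" using close[of u] su by (simp add: dist_commute)
          finally have "dist (G y) (G (D s)) < e"
            by (intro \<rho>G inball sab yb)
          then have ne: "norm (G y - G (D s)) \<le> e" by (simp add: dist_norm)
          show ?thesis
          proof (rule onorm_bound)
            show "0 \<le> e" using e by simp
            fix v
            have "norm ((G y - G (D s)) \<bullet> v) \<le> norm (G y - G (D s)) * norm v"
              by (simp add: Cauchy_Schwarz_ineq2)
            also have "\<dots> \<le> e * norm v" using ne by (intro mult_right_mono) auto
            finally show "norm ((G y - G (D s)) \<bullet> v) \<le> e * norm v" .
          qed
        qed
      qed auto
      have MV': "\<bar>F (D u) - F (D s) - G (D s) \<bullet> (D u - D s)\<bar> \<le> e * (M u - M s)"
      proof -
        have "\<bar>F (D u) - F (D s) - G (D s) \<bullet> (D u - D s)\<bar> \<le> e * norm (D u - D s)"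
          using MV by (simp add: inner_diff_right algebra_simps)
        also have "\<dots> \<le> e * (M u - M s)" using normD e by simp
        finally show ?thesis .
      qed
      have lin: "G (D s) \<bullet> (D u - D s) = integral {s..u} (\<lambda>r'. G (D s) \<bullet> g r')"
        unfolding DuDs
        using integral_linear[OF gsu bounded_linear_inner_right[of "G (D s)"]] by (simp add: o_def)
      have cgi: "(\<lambda>r'. G (D s) \<bullet> g r') integrable_on {s..u}"
        using integrable_linear[OF gsu bounded_linear_inner_right[of "G (D s)"]] by (simp add: o_def)
      have I2: "\<bar>integral {s..u} (\<lambda>r'. G (D s) \<bullet> g r') - integral {s..u} Hi\<bar> \<le> e * (M u - M s)"
      proof -
        have "integral {s..u} (\<lambda>r'. G (D s) \<bullet> g r') - integral {s..u} Hi
            = integral {s..u} (\<lambda>r'. G (D s) \<bullet> g r' - Hi r')"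
          by (rule integral_diff[symmetric, OF cgi Hsu])
        also have "norm \<dots> \<le> integral {s..u} (\<lambda>r'. e * m r')"
        proof (rule integral_norm_bound_integral)
          show "(\<lambda>r'. G (D s) \<bullet> g r' - Hi r') integrable_on {s..u}" by (intro integrable_diff cgi Hsu)
          show "(\<lambda>r'. e * m r') integrable_on {s..u}" using integrable_on_cmult_left[OF msu, where c = e] by simp
          fix r' assume r': "r' \<in> {s..u}"
          have r'ab: "r' \<in> {a..b}" using r' su by auto
          have "dist (G (D s)) (G (D r')) < e"
            using close[OF r'] by (intro \<rho>G inball r'ab sab) (simp add: dist_commute)
          then have ne: "norm (G (D s) - G (D r')) \<le> e" by (simp add: dist_norm)
          have "norm (G (D s) \<bullet> g r' - Hi r') = \<bar>(G (D s) - G (D r')) \<bullet> g r'\<bar>"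
            by (simp add: Hi_def[abs_def] inner_diff_left)
          also have "\<dots> \<le> norm (G (D s) - G (D r')) * m r'"
            unfolding m_def[abs_def] by (rule Cauchy_Schwarz_ineq2)
          also have "\<dots> \<le> e * m r'" using ne by (intro mult_right_mono) (auto simp: m_def[abs_def])
          finally show "norm (G (D s) \<bullet> g r' - Hi r') \<le> e * m r'" .
        qed
        also have "\<dots> = e * (M u - M s)" by (simp add: MuMs)
        finally show ?thesis by simp
      qed
      have "Phi u - Phi s = (F (D u) - F (D s) - G (D s) \<bullet> (D u - D s))
               + (integral {s..u} (\<lambda>r'. G (D s) \<bullet> g r') - integral {s..u} Hi)"
        unfolding Phi_def[abs_def] using HuHs lin by (simp add: algebra_simps)
      then have "\<bar>Phi u - Phi s\<bar> \<le> e * (M u - M s) + e * (M u - M s)"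
        using MV' I2 by linarith
      then show ?thesis by simp
    qed
    have IND: "\<forall>u. a \<le> u \<and> u \<le> b \<and> u \<le> a + real k * (\<delta>/2) \<longrightarrow> \<bar>Phi u - Phi a\<bar> \<le> 2 * e * (M u - M a)" for k
    proof (induction k)
      case 0
      then show ?case by auto
    next
      case (Suc k)
      show ?case
      proof (intro allI impI)
        fix u assume u: "a \<le> u \<and> u \<le> b \<and> u \<le> a + real (Suc k) * (\<delta>/2)"
        show "\<bar>Phi u - Phi a\<bar> \<le> 2 * e * (M u - M a)"
        proof (cases "u \<le> a + real k * (\<delta>/2)")
          case True then show ?thesis using Suc.IH u by blast
        next
          case False
          define s where "s = a + real k * (\<delta>/2)"
          have s: "a \<le> s" "s \<le> u" "u - s < \<delta>"
          proof -
            have sk: "real (Suc k) * (\<delta>/2) = real k * (\<delta>/2) + \<delta>/2" by (simp add: algebra_simps)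
            have nn: "real k * (\<delta>/2) \<ge> 0" using \<delta> by simp
            show "a \<le> s" "s \<le> u" "u - s < \<delta>"
              using False u \<delta> sk nn unfolding s_def by linarith+
          qed
          have A: "\<bar>Phi s - Phi a\<bar> \<le> 2 * e * (M s - M a)"
            using Suc.IH s u by (auto simp: s_def)
          have B: "\<bar>Phi u - Phi s\<bar> \<le> 2 * e * (M u - M s)"
            using LC[of s u] s u by auto
          show ?thesis using A B by (simp add: algebra_simps)
        qed
      qed
    qed
    obtain k where k: "(b - a) / (\<delta>/2) \<le> real k" using real_arch_simple by blast
    have "t \<le> a + real k * (\<delta>/2)"
      using k t \<delta> by (auto simp: field_simps)
    then have "\<bar>Phi t - Phi a\<bar> \<le> 2 * e * (M t - M a)" using IND[of k] t by auto
    then show ?thesis using Phia Ma by (simp add: algebra_simps)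
  qed
  have "Phi t - F x = 0"
    by (rule zero_if_small[of "2 * M t"]) (use Mnn[OF t] main in \<open>auto simp: mult.commute\<close>)
  then show "F (x + integral {a..t} g) = F x + integral {a..t} (\<lambda>s. G (x + integral {a..s} g) \<bullet> g s)"
    by (simp add: Phi_def[abs_def] Hi_def[abs_def] D_def[abs_def])
qed

lemma cont_times_abs_int:
  fixes v w :: "real \<Rightarrow> real"
  assumes "continuous_on {a..u} v" "w absolutely_integrable_on {a..u}"
  shows "(\<lambda>s. w s * v s) absolutely_integrable_on {a..u}"
proof -
  have "(\<lambda>s. v s * w s) absolutely_integrable_on {a..u}"
  proof (rule absolutely_integrable_bounded_measurable_product_real)
    show "v \<in> borel_measurable (lebesgue_on {a..u})"
      by (rule continuous_imp_measurable_on_sets_lebesgue[OF assms(1)]) auto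
    show "bounded (v ` {a..u})"
      by (intro compact_imp_bounded compact_continuous_image assms(1)) auto
  qed (use assms in auto)
  then show ?thesis by (simp add: mult.commute)
qed

lemma gronwall_zero:
  fixes v w :: "real \<Rightarrow> real"
  assumes vc: "continuous_on {a..b} v" and vnn: "\<And>t. t \<in> {a..b} \<Longrightarrow> v t \<ge> 0"
    and w: "w absolutely_integrable_on {a..b}" and wnn: "\<And>t. t \<in> {a..b} \<Longrightarrow> w t \<ge> 0"
    and le: "\<And>t. t \<in> {a..b} \<Longrightarrow> v t \<le> integral {a..t} (\<lambda>s. w s * v s)"
    and t: "t \<in> {a..b}"
  shows "v t = 0"
proof -
  have wi: "w integrable_on {a..b}" using abs_int_integrable[OF w] by simp
  define W where "W u = integral {a..u} w" for u
  have Wc: "continuous_on {a..b} W"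
    unfolding W_def[abs_def] by (rule indefinite_integral_continuous_1[OF wi])
  then have "uniformly_continuous_on {a..b} W" by (intro compact_uniformly_continuous) auto
  then obtain \<delta> where \<delta>: "\<delta> > 0" and \<delta>W: "\<And>s s'. s \<in> {a..b} \<Longrightarrow> s' \<in> {a..b} \<Longrightarrow> dist s' s < \<delta> \<Longrightarrow> dist (W s') (W s) < 1/2"
    unfolding uniformly_continuous_on_def by (metis zero_less_divide_1_iff zero_less_numeral)
  have wvi: "(\<lambda>s. w s * v s) integrable_on {c..d}" if "{c..d} \<subseteq> {a..b}" for c d
    using abs_int_integrable(1)[OF cont_times_abs_int[OF continuous_on_subset[OF vc that] abs_int_sub[OF w that]]] .
  have IND: "\<forall>u. a \<le> u \<and> u \<le> b \<and> u \<le> a + real k * (\<delta>/2) \<longrightarrow> v u = 0" for k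
  proof (induction k)
    case 0
    show ?case
    proof (intro allI impI)
      fix u assume u: "a \<le> u \<and> u \<le> b \<and> u \<le> a + real 0 * (\<delta>/2)"
      then have "u = a" by auto
      then show "v u = 0" using le[of a] vnn[of a] u by auto
    qed
  next
    case (Suc k)
    show ?case
    proof (intro allI impI)
      fix u assume u: "a \<le> u \<and> u \<le> b \<and> u \<le> a + real (Suc k) * (\<delta>/2)"
      show "v u = 0"
      proof (cases "u \<le> a + real k * (\<delta>/2)")
        case True then show ?thesis using Suc.IH u by blast
      next
        case False
        define c where "c = a + real k * (\<delta>/2)"
        define e where "e = min b (a + real (Suc k) * (\<delta>/2))"
        have ce: "a \<le> c" "c < u" "u \<le> e" "e \<le> b" "e - c \<le> \<delta>/2"
        proof -
          have sk: "real (Suc k) * (\<delta>/2) = real k * (\<delta>/2) + \<delta>/2" by (simp add: algebra_simps)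
          have nn: "real k * (\<delta>/2) \<ge> 0" using \<delta> by simp
          have e1: "e \<le> a + real (Suc k) * (\<delta>/2)" "e \<le> b" by (simp_all add: e_def)
          show "a \<le> c" "c < u" using False nn unfolding c_def by linarith+
          show "u \<le> e" using u by (simp add: e_def)
          show "e \<le> b" by (rule e1(2))
          show "e - c \<le> \<delta>/2" using e1(1) sk unfolding c_def by linarith
        qed
        obtain t0 where t0: "t0 \<in> {c..e}" and t0max: "\<And>u'. u' \<in> {c..e} \<Longrightarrow> v u' \<le> v t0"
          using continuous_attains_sup[of "{c..e}" v] continuous_on_subset[OF vc, of "{c..e}"] ce
          by fastforce
        have zero_ac: "v s = 0" if "s \<in> {a..c}" for s
          using Suc.IH that ce by (auto simp: c_def)
        have bound: "v u' \<le> v t0 / 2" if u': "u' \<in> {c..e}" for u'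
        proof -
          have "v u' \<le> integral {a..u'} (\<lambda>s. w s * v s)" using le[of u'] u' ce by auto
          also have "\<dots> = integral {a..c} (\<lambda>s. w s * v s) + integral {c..u'} (\<lambda>s. w s * v s)"
            using u' ce by (intro Henstock_Kurzweil_Integration.integral_combine[symmetric] wvi) auto
          also have "integral {a..c} (\<lambda>s. w s * v s) = 0"
          proof -
            have "integral {a..c} (\<lambda>s. w s * v s) = integral {a..c} (\<lambda>s. 0::real)"
              by (rule integral_cong) (use zero_ac in auto)
            then show ?thesis by simp
          qed
          also have "integral {c..u'} (\<lambda>s. w s * v s) \<le> integral {c..u'} (\<lambda>s. v t0 * w s)"
          proof (rule integral_le)
            show "(\<lambda>s. w s * v s) integrable_on {c..u'}" using u' ce by (intro wvi) auto
            show "(\<lambda>s. v t0 * w s) integrable_on {c..u'}"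
            proof -
              have "w integrable_on {c..u'}" using u' ce by (intro integrable_on_subinterval[OF wi]) auto
              from integrable_on_cmult_left[OF this, where c = "v t0"] show ?thesis by simp
            qed
            fix s assume s: "s \<in> {c..u'}"
            then have "s \<in> {c..e}" "s \<in> {a..b}" using u' ce by auto
            then have "v s \<le> v t0" "0 \<le> w s" using t0max wnn by auto
            then have "v s * w s \<le> v t0 * w s" by (rule mult_right_mono)
            then show "w s * v s \<le> v t0 * w s" by (simp add: mult.commute)
          qed
          also have "\<dots> = v t0 * (W u' - W c)"
          proof -
            have "integral {a..c} w + integral {c..u'} w = integral {a..u'} w"
              using u' ce by (intro Henstock_Kurzweil_Integration.integral_combine integrable_on_subinterval[OF wi]) auto
            then have "integral {c..u'} w = W u' - W c" by (simp add: W_def[abs_def] algebra_simps)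
            then show ?thesis by simp
          qed
          also have "\<dots> \<le> v t0 * (1/2)"
          proof (intro mult_left_mono)
            have "dist (W u') (W c) < 1/2"
              using u' ce \<delta> by (intro \<delta>W) (auto simp: dist_real_def)
            then show "W u' - W c \<le> 1/2" using abs_ge_self[of "W u' - W c"] unfolding dist_real_def by linarith
            show "0 \<le> v t0" using vnn t0 ce by auto
          qed
          finally show ?thesis by simp
        qed
        have "v t0 \<le> v t0 / 2" using bound[OF t0] .
        then have "v t0 \<le> 0" by simp
        moreover have "v u \<le> v t0" "v u \<ge> 0" using t0max[of u] ce u vnn[of u] by auto
        ultimately show ?thesis by simp
      qed
    qed
  qed
  obtain k where k: "(b - a) / (\<delta>/2) \<le> real k" using real_arch_simple by blast
  have "t \<le> a + real k * (\<delta>/2)"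
    using k t \<delta> by (auto simp: field_simps)
  then show ?thesis using IND[of k] t by auto
qed

lemma exp_chain:
  fixes w :: "real \<Rightarrow> real"
  assumes w: "w absolutely_integrable_on {a..b}" and t: "t \<in> {a..b}"
  shows "(\<lambda>s. exp (integral {a..s} w) * w s) absolutely_integrable_on {a..t}"
    "exp (integral {a..t} w) = 1 + integral {a..t} (\<lambda>s. exp (integral {a..s} w) * w s)"
proof -
  have F: "(exp has_derivative (\<lambda>v. exp y \<bullet> v)) (at y)" for y :: real
    using DERIV_exp[of y] by (simp add: has_field_derivative_def inner_real_def)
  have G: "continuous_on UNIV (exp :: real \<Rightarrow> real)" by (intro continuous_intros)
  note C = chain_rule_AC[where F = exp and G = exp and x = 0, OF F G w t]
  show "(\<lambda>s. exp (integral {a..s} w) * w s) absolutely_integrable_on {a..t}"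
    using C(1) by (simp add: inner_real_def)
  show "exp (integral {a..t} w) = 1 + integral {a..t} (\<lambda>s. exp (integral {a..s} w) * w s)"
    using C(2) by (simp add: inner_real_def)
qed

lemma gronwall_exp:
  fixes phi w :: "real \<Rightarrow> real"
  assumes pc: "continuous_on {a..b} phi"
    and w: "w absolutely_integrable_on {a..b}" and wnn: "\<And>t. t \<in> {a..b} \<Longrightarrow> w t \<ge> 0"
    and A: "A \<ge> 0"
    and le: "\<And>t. t \<in> {a..b} \<Longrightarrow> phi t \<le> A + integral {a..t} (\<lambda>s. w s * phi s)"
    and t: "t \<in> {a..b}"
  shows "phi t \<le> A * exp (integral {a..b} w)"
proof -
  have wi: "w integrable_on {a..b}" using abs_int_integrable[OF w] by simp
  define W where "W u = integral {a..u} w" for u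
  have Wc: "continuous_on {a..b} W"
    unfolding W_def[abs_def] by (rule indefinite_integral_continuous_1[OF wi])
  define psi where "psi u = A * exp (W u)" for u
  have psic: "continuous_on {a..b} psi" unfolding psi_def[abs_def] by (intro continuous_intros Wc)
  have psieq: "psi u = A + integral {a..u} (\<lambda>s. w s * psi s)" if u: "u \<in> {a..b}" for u
  proof -
    have "psi u = A * (1 + integral {a..u} (\<lambda>s. exp (W s) * w s))"
      using exp_chain(2)[OF w u] by (simp add: psi_def[abs_def] W_def[abs_def])
    also have "\<dots> = A + integral {a..u} (\<lambda>s. A * (exp (W s) * w s))"
      by (simp add: algebra_simps)
    also have "integral {a..u} (\<lambda>s. A * (exp (W s) * w s)) = integral {a..u} (\<lambda>s. w s * psi s)"
      by (simp add: psi_def[abs_def] mult.commute mult.left_commute)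
    finally show ?thesis .
  qed
  define v where "v u = max (phi u - psi u) 0" for u
  have vc: "continuous_on {a..b} v" unfolding v_def[abs_def] by (intro continuous_intros pc psic)
  have prodi: "(\<lambda>s. w s * f s) integrable_on {a..u}" if "continuous_on {a..b} f" "u \<in> {a..b}" for f u
  proof -
    have sub: "{a..u} \<subseteq> {a..b}" using that by auto
    show ?thesis
      using abs_int_integrable(1)[OF cont_times_abs_int[OF continuous_on_subset[OF that(1) sub] abs_int_sub[OF w sub]]] .
  qed
  have vle: "v u \<le> integral {a..u} (\<lambda>s. w s * v s)" if u: "u \<in> {a..b}" for u
  proof -
    have nn: "integral {a..u} (\<lambda>s. w s * v s) \<ge> 0"
      by (intro integral_nonneg prodi[OF vc u]) (use u wnn in \<open>auto simp: v_def[abs_def]\<close>)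
    have "phi u - psi u \<le> integral {a..u} (\<lambda>s. w s * phi s) - integral {a..u} (\<lambda>s. w s * psi s)"
      using le[OF u] psieq[OF u] by simp
    also have "\<dots> = integral {a..u} (\<lambda>s. w s * (phi s - psi s))"
      by (simp add: right_diff_distrib integral_diff[OF prodi[OF pc u] prodi[OF psic u]])
    also have "\<dots> \<le> integral {a..u} (\<lambda>s. w s * v s)"
    proof (rule integral_le)
      show "(\<lambda>s. w s * (phi s - psi s)) integrable_on {a..u}"
        by (intro prodi continuous_intros pc psic u)
      show "(\<lambda>s. w s * v s) integrable_on {a..u}" by (intro prodi vc u)
      fix s assume "s \<in> {a..u}"
      then have "w s \<ge> 0" using u wnn by auto
      then show "w s * (phi s - psi s) \<le> w s * v s" by (intro mult_left_mono) (auto simp: v_def[abs_def])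
    qed
    finally show ?thesis using nn by (simp add: v_def[abs_def])
  qed
  have "v t = 0"
    by (rule gronwall_zero[OF vc _ w wnn vle t]) (auto simp: v_def[abs_def])
  then have "phi t \<le> psi t" by (simp add: v_def[abs_def])
  also have "\<dots> \<le> A * exp (integral {a..b} w)"
  proof -
    have "integral {a..t} w + integral {t..b} w = integral {a..b} w"
      using t by (intro Henstock_Kurzweil_Integration.integral_combine wi) auto
    moreover have "integral {t..b} w \<ge> 0"
      using t wnn by (intro integral_nonneg integrable_on_subinterval[OF wi]) auto
    ultimately have "W t \<le> integral {a..b} w" by (simp add: W_def[abs_def])
    then show ?thesis using A by (simp add: psi_def[abs_def] mult_left_mono)
  qed
  finally show ?thesis .
qed

lemma L2_facts:
  fixes h :: "real \<Rightarrow> real^'m"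
  assumes "L2_on T h"
  shows "(\<lambda>t. (norm (h t))\<^sup>2) absolutely_integrable_on {0..T}"
    and "h absolutely_integrable_on {0..T}"
    and "h \<in> borel_measurable (lebesgue_on {0..T})"
proof -
  show sq: "(\<lambda>t. (norm (h t))\<^sup>2) absolutely_integrable_on {0..T}"
    using assms by (simp add: L2_on_def)
  show hm: "h \<in> borel_measurable (lebesgue_on {0..T})"
    using assms unfolding L2_on_def set_borel_measurable_def
    by (subst borel_measurable_restrict_space_iff) auto
  show "h absolutely_integrable_on {0..T}"
  proof (rule measurable_bounded_by_integrable_imp_absolutely_integrable[OF hm])
    show "(\<lambda>t. 1 + (norm (h t))\<^sup>2) integrable_on {0..T}"
      using abs_int_integrable(1)[OF sq] by (intro integrable_add) auto
    fix t show "norm (h t) \<le> 1 + (norm (h t))\<^sup>2"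
    proof -
      have a: "0 \<le> (norm (h t) - 1)\<^sup>2" by simp
      then have "2 * norm (h t) \<le> (norm (h t))\<^sup>2 + 1" by (simp add: power2_diff)
      then show ?thesis using norm_ge_zero[of "h t"] by linarith
    qed
  qed auto
qed

lemma osl_ball:
  fixes b :: "real^'d \<Rightarrow> real^'d" and \<sigma> :: "real^'d \<Rightarrow> real^'m^'d"
  assumes cb: "continuous_on UNIV b" and cs: "continuous_on UNIV \<sigma>"
    and A: "assumption_2_1 b \<sigma>" and R: "R > 0"
  obtains L where "L > 0" "\<And>x y. norm x \<le> R \<Longrightarrow> norm y \<le> R \<Longrightarrow>
      2 * ((x - y) \<bullet> (b x - b y)) + (norm (\<sigma> x - \<sigma> y))\<^sup>2 \<le> L * (norm (x - y))\<^sup>2"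
proof -
  obtain e0 where e0: "0 < e0" "e0 < 1" and Ls: "\<And>R. R > 0 \<Longrightarrow> \<exists>L>0. \<forall>x y. max (norm x) (norm y) \<le> R \<and> norm (x - y) \<le> e0 \<longrightarrow>
          2 * ((x - y) \<bullet> (b x - b y)) + (norm (\<sigma> x - \<sigma> y))\<^sup>2 \<le> L * (norm (x - y))\<^sup>2"
    using A unfolding assumption_2_1_def by blast
  obtain L1 where L1: "L1 > 0" "\<And>x y. max (norm x) (norm y) \<le> R \<and> norm (x - y) \<le> e0 \<Longrightarrow>
          2 * ((x - y) \<bullet> (b x - b y)) + (norm (\<sigma> x - \<sigma> y))\<^sup>2 \<le> L1 * (norm (x - y))\<^sup>2"
    using Ls[OF R] by blast
  have "bounded (b ` cball 0 R)"
    by (intro compact_imp_bounded compact_continuous_image continuous_on_subset[OF cb]) auto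
  then obtain Kb where Kb: "\<And>y. norm y \<le> R \<Longrightarrow> norm (b y) \<le> Kb"
    unfolding bounded_iff by (metis image_eqI mem_cball_0)
  have "bounded (\<sigma> ` cball 0 R)"
    by (intro compact_imp_bounded compact_continuous_image continuous_on_subset[OF cs]) auto
  then obtain Ks where Ks: "\<And>y. norm y \<le> R \<Longrightarrow> norm (\<sigma> y) \<le> Ks"
    unfolding bounded_iff by (metis image_eqI mem_cball_0)
  have "norm (b 0) \<le> Kb" using R by (intro Kb) simp
  then have Kb0: "Kb \<ge> 0" by (meson norm_ge_zero order_trans)
  have "norm (\<sigma> 0) \<le> Ks" using R by (intro Ks) simp
  then have Ks0: "Ks \<ge> 0" by (meson norm_ge_zero order_trans)
  define L where "L = L1 + 4 * Kb / e0 + 4 * Ks\<^sup>2 / e0\<^sup>2"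
  have Lpos: "L > 0" unfolding L_def using L1 Kb0 Ks0 e0 by (intro add_pos_nonneg) auto
  show ?thesis
  proof (rule that[OF Lpos])
    fix x y :: "real^'d" assume x: "norm x \<le> R" and y: "norm y \<le> R"
    define d where "d = norm (x - y)"
    show "2 * ((x - y) \<bullet> (b x - b y)) + (norm (\<sigma> x - \<sigma> y))\<^sup>2 \<le> L * (norm (x - y))\<^sup>2"
    proof (cases "d \<le> e0")
      case True
      then have "2 * ((x - y) \<bullet> (b x - b y)) + (norm (\<sigma> x - \<sigma> y))\<^sup>2 \<le> L1 * (norm (x - y))\<^sup>2"
        using L1(2)[of x y] x y by (auto simp: d_def[abs_def])
      also have "\<dots> \<le> L * (norm (x - y))\<^sup>2"
        unfolding L_def using Kb0 Ks0 e0 by (intro mult_right_mono) auto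
      finally show ?thesis .
    next
      case False
      then have d: "d > e0" by simp
      have "(x - y) \<bullet> (b x - b y) \<le> d * norm (b x - b y)"
        unfolding d_def[abs_def] by (rule order_trans[OF _ Cauchy_Schwarz_ineq2]) simp
      also have "\<dots> \<le> d * (2 * Kb)"
      proof -
        have "norm (b x - b y) \<le> norm (b x) + norm (b y)" by (rule norm_triangle_ineq4)
        also have "\<dots> \<le> 2 * Kb" using Kb[OF x] Kb[OF y] by simp
        finally show ?thesis by (intro mult_left_mono) (auto simp: d_def[abs_def])
      qed
      finally have i1a: "(x - y) \<bullet> (b x - b y) \<le> d * (2 * Kb)" .
      have e: "d * (2 * Kb) = 2 * (Kb * d)" by (simp add: ac_simps)
      have i1: "2 * ((x - y) \<bullet> (b x - b y)) \<le> 4 * Kb * d" using i1a e by linarith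
      have "norm (\<sigma> x - \<sigma> y) \<le> 2 * Ks"
      proof -
        have "norm (\<sigma> x - \<sigma> y) \<le> norm (\<sigma> x) + norm (\<sigma> y)" by (rule norm_triangle_ineq4)
        also have "\<dots> \<le> 2 * Ks" using Ks[OF x] Ks[OF y] by simp
        finally show ?thesis .
      qed
      then have "(norm (\<sigma> x - \<sigma> y))\<^sup>2 \<le> (2 * Ks)\<^sup>2" by (intro power_mono) simp_all
      then have i2: "(norm (\<sigma> x - \<sigma> y))\<^sup>2 \<le> 4 * Ks\<^sup>2" by (simp add: power_mult_distrib)
      have r1: "d / e0 \<ge> 1" using d e0 by simp
      have i1': "4 * Kb * d \<le> 4 * Kb / e0 * d\<^sup>2"
      proof -
        have "4 * Kb * d = 4 * Kb * d * 1" by simp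
        also have "\<dots> \<le> 4 * Kb * d * (d / e0)" using r1 Kb0 d e0 by (intro mult_left_mono) auto
        also have "\<dots> = 4 * Kb / e0 * d\<^sup>2" by (simp add: power2_eq_square)
        finally show ?thesis .
      qed
      have i2': "4 * Ks\<^sup>2 \<le> 4 * Ks\<^sup>2 / e0\<^sup>2 * d\<^sup>2"
      proof -
        have "(d / e0)\<^sup>2 \<ge> 1" using r1 by (simp add: one_le_power)
        then have "4 * Ks\<^sup>2 * 1 \<le> 4 * Ks\<^sup>2 * (d / e0)\<^sup>2" by (intro mult_left_mono) auto
        then show ?thesis by (simp add: power_divide)
      qed
      have "L1 * d\<^sup>2 \<ge> 0" using L1 by simp
      then show ?thesis using i1 i2 i1' i2' unfolding L_def d_def[symmetric]
        by (simp add: algebra_simps)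
    qed
  qed
qed

lemma inner_mat_vec:
  fixes A :: "real^'m^'d" and u :: "real^'d" and v :: "real^'m"
  shows "u \<bullet> (A *v v) = (transpose A *v u) \<bullet> v"
  by (simp add: dot_lmul_matrix)

lemma pointwise_osl:
  fixes b :: "real^'d \<Rightarrow> real^'d" and \<sigma> :: "real^'d \<Rightarrow> real^'m^'d"
  assumes L: "2 * ((x - y) \<bullet> (b x - b y)) + (norm (\<sigma> x - \<sigma> y))\<^sup>2 \<le> L * (norm (x - y))\<^sup>2"
  shows "(2 *\<^sub>R (x - y)) \<bullet> ((b x + \<sigma> x *v k) - (b y + \<sigma> y *v k)) \<le> (L + (norm k)\<^sup>2) * ((x - y) \<bullet> (x - y))"
proof -
  define z where "z = x - y"
  define S where "S = \<sigma> x - \<sigma> y"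
  have eq: "(b x + \<sigma> x *v k) - (b y + \<sigma> y *v k) = (b x - b y) + S *v k"
    by (simp add: S_def[abs_def] matrix_vector_mult_diff_rdistrib)
  have "z \<bullet> (S *v k) \<le> norm z * norm (S *v k)"
    by (rule order_trans[OF abs_ge_self Cauchy_Schwarz_ineq2])
  also have "\<dots> \<le> norm z * (norm S * norm k)"
    by (intro mult_left_mono norm_mat_vec_le) simp
  finally have "2 * (z \<bullet> (S *v k)) \<le> 2 * (norm z * (norm S * norm k))" by simp
  also have "\<dots> \<le> (norm S)\<^sup>2 + (norm z)\<^sup>2 * (norm k)\<^sup>2"
  proof -
    define a where "a = norm S"
    define c where "c = norm z * norm k"
    have e1: "2 * (norm z * (norm S * norm k)) = 2 * a * c" by (simp add: a_def c_def mult_ac)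
    have e2: "(norm z)\<^sup>2 * (norm k)\<^sup>2 = c\<^sup>2" by (simp add: c_def power_mult_distrib)
    have e3: "(norm S)\<^sup>2 = a\<^sup>2" by (simp add: a_def)
    have "0 \<le> (a - c)\<^sup>2" by simp
    then have "2 * a * c \<le> a\<^sup>2 + c\<^sup>2" by (simp add: power2_diff)
    then show ?thesis unfolding e1 e2 e3 .
  qed
  finally have c: "2 * (z \<bullet> (S *v k)) \<le> (norm S)\<^sup>2 + (norm z)\<^sup>2 * (norm k)\<^sup>2" .
  have "(2 *\<^sub>R z) \<bullet> ((b x - b y) + S *v k) = 2 * (z \<bullet> (b x - b y)) + 2 * (z \<bullet> (S *v k))"
    by (simp add: inner_add_right)
  also have "\<dots> \<le> L * (norm z)\<^sup>2 - (norm S)\<^sup>2 + ((norm S)\<^sup>2 + (norm z)\<^sup>2 * (norm k)\<^sup>2)"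
    using L c by (simp add: z_def[abs_def] S_def[abs_def])
  also have "\<dots> = (L + (norm k)\<^sup>2) * (z \<bullet> z)"
    by (simp add: power2_norm_eq_inner algebra_simps)
  finally show ?thesis by (simp add: eq z_def[abs_def])
qed

lemma uniqueness:
  fixes b :: "real^'d \<Rightarrow> real^'d" and \<sigma> :: "real^'d \<Rightarrow> real^'m^'d"
  assumes cb: "continuous_on UNIV b" and cs: "continuous_on UNIV \<sigma>"
    and A: "assumption_2_1 b \<sigma>" and h: "L2_on T h"
    and Xc: "continuous_on {0..T} X" and Yc: "continuous_on {0..T} Y"
    and XT: "(\<lambda>s. b (X s) + \<sigma> (X s) *v h s) absolutely_integrable_on {0..T}"
    and YT: "(\<lambda>s. b (Y s) + \<sigma> (Y s) *v h s) absolutely_integrable_on {0..T}"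
    and Xe: "\<And>t. t \<in> {0..T} \<Longrightarrow> X t = x + integral {0..t} (\<lambda>s. b (X s) + \<sigma> (X s) *v h s)"
    and Ye: "\<And>t. t \<in> {0..T} \<Longrightarrow> Y t = x + integral {0..t} (\<lambda>s. b (Y s) + \<sigma> (Y s) *v h s)"
    and t: "t \<in> {0..T}"
  shows "Y t = X t"
proof -
  have "bounded (X ` {0..T} \<union> Y ` {0..T})"
    using compact_imp_bounded[OF compact_continuous_image[OF Xc compact_Icc]]
      compact_imp_bounded[OF compact_continuous_image[OF Yc compact_Icc]] by (rule bounded_Un[THEN iffD2, OF conjI])
  then obtain R0 where R0: "\<And>z. z \<in> X ` {0..T} \<union> Y ` {0..T} \<Longrightarrow> norm z \<le> R0"
    unfolding bounded_iff by blast
  define R where "R = max R0 1"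
  have R: "R > 0" by (simp add: R_def)
  have XR: "norm (X s) \<le> R" and YR: "norm (Y s) \<le> R" if "s \<in> {0..T}" for s
    using R0[of "X s"] R0[of "Y s"] that by (auto simp: R_def)
  obtain L where L: "L > 0" "\<And>x y. norm x \<le> R \<Longrightarrow> norm y \<le> R \<Longrightarrow>
      2 * ((x - y) \<bullet> (b x - b y)) + (norm (\<sigma> x - \<sigma> y))\<^sup>2 \<le> L * (norm (x - y))\<^sup>2"
    using osl_ball[OF cb cs A R] by blast
  define fX where "fX s = b (X s) + \<sigma> (X s) *v h s" for s
  define fY where "fY s = b (Y s) + \<sigma> (Y s) *v h s" for s
  define g where "g s = fX s - fY s" for s
  have gT: "g absolutely_integrable_on {0..T}"
    unfolding g_def[abs_def] fX_def[abs_def] fY_def[abs_def] using set_integral_diff(1)[OF XT YT] by simp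
  have Zeq: "X s - Y s = 0 + integral {0..s} g" if "s \<in> {0..T}" for s
  proof -
    have "fX integrable_on {0..s}" "fY integrable_on {0..s}"
      using that abs_int_integrable(1)[OF abs_int_sub[OF XT]] abs_int_integrable(1)[OF abs_int_sub[OF YT]]
      by (auto simp: fX_def[abs_def] fY_def[abs_def])
    then show ?thesis
      using Xe[OF that] Ye[OF that] by (simp add: g_def[abs_def] integral_diff fX_def[abs_def] fY_def[abs_def])
  qed
  have Fd: "((\<lambda>y. y \<bullet> y) has_derivative (\<lambda>v. (2 *\<^sub>R y) \<bullet> v)) (at y)" for y :: "real^'d"
  proof -
    have "((\<lambda>y. y \<bullet> y) has_derivative (\<lambda>v. y \<bullet> v + v \<bullet> y)) (at y)"
      by (rule has_derivative_inner[OF has_derivative_ident has_derivative_ident])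
    then show ?thesis by (simp add: inner_commute)
  qed
  have Gc: "continuous_on UNIV (\<lambda>y::real^'d. 2 *\<^sub>R y)" by (intro continuous_intros)
  note CR = chain_rule_AC[where F = "\<lambda>y. y \<bullet> y" and G = "\<lambda>y. 2 *\<^sub>R y" and x = 0, OF Fd Gc gT]
  define v where "v s = (X s - Y s) \<bullet> (X s - Y s)" for s
  define w where "w s = L + (norm (h s))\<^sup>2" for s
  have vc: "continuous_on {0..T} v" unfolding v_def[abs_def] by (intro continuous_intros Xc Yc)
  have wT: "w absolutely_integrable_on {0..T}"
  proof -
    have "(\<lambda>s. L) absolutely_integrable_on {0..T}"
      by (rule absolutely_integrable_integrable_bound[where g = "\<lambda>s. \<bar>L\<bar>"]) auto
    then show ?thesis unfolding w_def[abs_def] using set_integral_add(1)[OF _ L2_facts(1)[OF h]] by simp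
  qed
  have wnn: "w s \<ge> 0" for s using L by (simp add: w_def[abs_def])
  have vle: "v u \<le> integral {0..u} (\<lambda>s. w s * v s)" if u: "u \<in> {0..T}" for u
  proof -
    have eq: "v u = integral {0..u} (\<lambda>s. (2 *\<^sub>R (X s - Y s)) \<bullet> g s)"
    proof -
      have "v u = (0 + integral {0..u} g) \<bullet> (0 + integral {0..u} g)"
        using Zeq[OF u] by (simp add: v_def[abs_def])
      also have "\<dots> = integral {0..u} (\<lambda>s. (2 *\<^sub>R (0 + integral {0..s} g)) \<bullet> g s)"
        using CR(2)[OF u] by simp
      also have "\<dots> = integral {0..u} (\<lambda>s. (2 *\<^sub>R (X s - Y s)) \<bullet> g s)"
        using u by (intro integral_cong) (auto simp: Zeq)
      finally show ?thesis .
    qed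
    have i1: "(\<lambda>s. (2 *\<^sub>R (X s - Y s)) \<bullet> g s) integrable_on {0..u}"
    proof -
      have "(\<lambda>s. (2 *\<^sub>R (0 + integral {0..s} g)) \<bullet> g s) integrable_on {0..u}"
        using abs_int_integrable(1)[OF CR(1)[OF u]] .
      then show ?thesis
        by (rule integrable_eq) (use u in \<open>auto simp: Zeq\<close>)
    qed
    have i2: "(\<lambda>s. w s * v s) integrable_on {0..u}"
      using abs_int_integrable(1)[OF cont_times_abs_int[OF continuous_on_subset[OF vc] abs_int_sub[OF wT]]] u by auto
    show ?thesis unfolding eq
    proof (rule integral_le[OF i1 i2])
      fix s assume s: "s \<in> {0..u}"
      then have sT: "s \<in> {0..T}" using u by auto
      show "(2 *\<^sub>R (X s - Y s)) \<bullet> g s \<le> w s * v s"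
        using pointwise_osl[OF L(2)[OF XR[OF sT] YR[OF sT]], of "h s"]
        by (simp add: g_def[abs_def] fX_def[abs_def] fY_def[abs_def] w_def[abs_def] v_def[abs_def])
    qed
  qed
  have "v t = 0"
    by (rule gronwall_zero[OF vc _ wT _ vle t]) (auto simp: v_def[abs_def] wnn)
  then show ?thesis by (simp add: v_def[abs_def])
qed

lemma borel_to_lebesgue_on:
  fixes f :: "real \<Rightarrow> 'b::euclidean_space"
  assumes "f \<in> borel_measurable borel"
  shows "f \<in> borel_measurable (lebesgue_on S)"
proof -
  have "f \<in> borel_measurable lborel" using assms by simp
  then have "f \<in> borel_measurable lebesgue" by (rule measurable_completion)
  then show ?thesis by (rule measurable_restrict_space1)
qed

lemma floor_comp_measurable:
  fixes P :: "nat \<Rightarrow> 'b::euclidean_space" and c :: real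
  shows "(\<lambda>s. P (nat \<lfloor>s / c\<rfloor>)) \<in> borel_measurable borel"
proof -
  have "(\<lambda>s::real. \<lfloor>s / c\<rfloor>) \<in> measurable borel (count_space UNIV)"
    by measurable
  moreover have "(\<lambda>i::int. P (nat i)) \<in> measurable (count_space UNIV) borel" by simp
  ultimately show ?thesis by (rule measurable_compose)
qed

lemma bilinear_mv: "bilinear (\<lambda>(A::real^'m^'d) (v::real^'m). A *v v)"
  unfolding bilinear_def
proof (intro conjI allI)
  show "linear (\<lambda>v. A *v v)" for A :: "real^'m^'d" by simp
  show "linear (\<lambda>A::real^'m^'d. A *v v)" for v :: "real^'m"
    by (rule linearI) (simp_all add: matrix_vector_mult_add_rdistrib scaleR_matrix_vector_assoc)
qed

lemma integrand_absint:
  fixes b :: "real^'d \<Rightarrow> real^'d" and \<sigma> :: "real^'d \<Rightarrow> real^'m^'d" and u :: real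
  assumes cb: "continuous_on UNIV b" and cs: "continuous_on UNIV \<sigma>"
    and h: "h absolutely_integrable_on {0..u}" and X: "continuous_on {0..u} X"
  shows "(\<lambda>s. b (X s) + \<sigma> (X s) *v h s) absolutely_integrable_on {0..u}"
proof -
  have c1: "continuous_on {0..u} (\<lambda>s. b (X s))"
    by (rule continuous_on_compose2[OF cb X]) auto
  have c2: "continuous_on {0..u} (\<lambda>s. \<sigma> (X s))"
    by (rule continuous_on_compose2[OF cs X]) auto
  have i1: "(\<lambda>s. b (X s)) absolutely_integrable_on {0..u}"
    by (rule absolutely_integrable_continuous_real[OF c1])
  have i2: "(\<lambda>s. (\<lambda>A v. A *v v) (\<sigma> (X s)) (h s)) absolutely_integrable_on {0..u}"
  proof (rule absolutely_integrable_bounded_measurable_product[OF bilinear_mv _ _ _ h])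
    show "(\<lambda>s. \<sigma> (X s)) \<in> borel_measurable (lebesgue_on {0..u})"
      by (rule continuous_imp_measurable_on_sets_lebesgue[OF c2]) auto
    show "bounded ((\<lambda>s. \<sigma> (X s)) ` {0..u})"
      by (intro compact_imp_bounded compact_continuous_image c2) auto
  qed auto
  show ?thesis using set_integral_add(1)[OF i1 i2] by simp
qed

lemma trunc_exist:
  fixes bt :: "real^'d \<Rightarrow> real^'d" and st :: "real^'d \<Rightarrow> real^'m^'d" and h :: "real \<Rightarrow> real^'m"
  assumes cb: "continuous_on UNIV bt" and cs: "continuous_on UNIV st"
    and Kb: "\<And>y. norm (bt y) \<le> Kb" and Ks: "\<And>y. norm (st y) \<le> Ks"
    and h: "h absolutely_integrable_on {0..T}" and T: "T > 0"
  shows "\<exists>X. continuous_on {0..T} X \<and>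
           (\<forall>t\<in>{0..T}. X t = x + integral {0..t} (\<lambda>s. bt (X s) + st (X s) *v h s))"
proof -
  have Kb0: "Kb \<ge> 0" using Kb[of 0] norm_ge_zero order_trans by blast
  have Ks0: "Ks \<ge> 0" using Ks[of 0] norm_ge_zero order_trans by blast
  have hm: "h \<in> borel_measurable (lebesgue_on {0..T})"
    using h absolutely_integrable_measurable[of "{0..T}" h] by auto
  have hi: "h integrable_on {0..T}" and nhi: "(\<lambda>s. norm (h s)) integrable_on {0..T}"
    using abs_int_integrable[OF h] by auto
  define m where "m s = Kb + Ks * norm (h s)" for s
  have mi: "m integrable_on {0..T}"
    unfolding m_def[abs_def]
    using integrable_on_cmult_left[OF nhi, where c = Ks] by (intro integrable_add) auto
  have mnn: "m s \<ge> 0" for s using Kb0 Ks0 by (simp add: m_def)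
  define Mm where "Mm u = integral {0..u} m" for u
  have Mmc: "continuous_on {0..T} Mm"
    unfolding Mm_def[abs_def] by (rule indefinite_integral_continuous_1[OF mi])
  have Mm_diff: "Mm t - Mm s = integral {s..t} m" if "0 \<le> s" "s \<le> t" "t \<le> T" for s t
  proof -
    have "integral {0..s} m + integral {s..t} m = integral {0..t} m"
      using that by (intro Henstock_Kurzweil_Integration.integral_combine integrable_on_subinterval[OF mi]) auto
    then show ?thesis by (simp add: Mm_def algebra_simps)
  qed
  have Mm_mono: "Mm s \<le> Mm t" if "0 \<le> s" "s \<le> t" "t \<le> T" for s t
    using Mm_diff[OF that] integral_nonneg[OF integrable_on_subinterval[OF mi], of s t] mnn that by auto
  have Mm0: "Mm 0 = 0" by (simp add: Mm_def)
  have qbound: "norm (bt y + st y *v h s) \<le> m s" for y s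
  proof -
    have "norm (bt y + st y *v h s) \<le> norm (bt y) + norm (st y *v h s)" by (rule norm_triangle_ineq)
    also have "\<dots> \<le> Kb + Ks * norm (h s)"
      by (rule add_mono[OF Kb[of y] order_trans[OF norm_mat_vec_le mult_right_mono[OF Ks[of y] norm_ge_zero]]])
    finally show ?thesis by (simp add: m_def)
  qed
  have qint: "(\<lambda>s. bt (Y s) + st (Y s) *v h s) absolutely_integrable_on {0..T}"
    if Ym: "Y \<in> borel_measurable (lebesgue_on {0..T})" for Y
  proof (rule measurable_bounded_by_integrable_imp_absolutely_integrable[OF _ _ mi])
    have bm: "bt \<in> borel_measurable borel" by (rule borel_measurable_continuous_onI[OF cb])
    have sm: "st \<in> borel_measurable borel" by (rule borel_measurable_continuous_onI[OF cs])
    have "(\<lambda>s. bt (Y s)) \<in> borel_measurable (lebesgue_on {0..T})"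
      using measurable_compose[OF Ym bm] .
    moreover have "(\<lambda>s. st (Y s)) \<in> borel_measurable (lebesgue_on {0..T})"
      using measurable_compose[OF Ym sm] .
    ultimately show "(\<lambda>s. bt (Y s) + st (Y s) *v h s) \<in> borel_measurable (lebesgue_on {0..T})"
      using hm bilinear_mv by (intro borel_measurable_add) (auto intro: borel_measurable_bilinear)
    show "norm (bt (Y s) + st (Y s) *v h s) \<le> m s" for s by (rule qbound)
  qed auto
  \<comment> \<open>Euler scheme\<close>
  define dl where "dl n = T / real (Suc n)" for n :: nat
  have dl: "dl n > 0" for n using T by (simp add: dl_def)
  define p where "p n = rec_nat x (\<lambda>k z. z + integral {real k * dl n .. real (Suc k) * dl n} (\<lambda>s. bt z + st z *v h s))" for n
  have p0: "p n 0 = x" for n by (simp add: p_def)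
  have pS: "p n (Suc k) = p n k + integral {real k * dl n .. real (Suc k) * dl n} (\<lambda>s. bt (p n k) + st (p n k) *v h s)" for n k
    by (simp add: p_def)
  define kap where "kap n s = nat \<lfloor>s / dl n\<rfloor>" for n s
  define q where "q n s = bt (p n (kap n s)) + st (p n (kap n s)) *v h s" for n s
  define Xn where "Xn n t = x + integral {0..t} (q n)" for n t
  have qabs: "q n absolutely_integrable_on {0..T}" for n
  proof -
    have "(\<lambda>s. p n (nat \<lfloor>s / dl n\<rfloor>)) \<in> borel_measurable (lebesgue_on {0..T})"
      by (rule borel_to_lebesgue_on[OF floor_comp_measurable])
    then show ?thesis using qint[of "\<lambda>s. p n (kap n s)"] by (simp add: q_def[abs_def] kap_def)
  qed
  have qi: "q n integrable_on {0..T}" for n using abs_int_integrable[OF qabs] by simp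
  have qsub: "q n integrable_on {s..t}" if "0 \<le> s" "t \<le> T" for n s t
    using that by (intro integrable_on_subinterval[OF qi]) auto
  have q_le: "norm (q n s) \<le> m s" for n s unfolding q_def by (rule qbound)
  have Xn_diff: "norm (Xn n t - Xn n s) \<le> Mm t - Mm s" if "0 \<le> s" "s \<le> t" "t \<le> T" for n s t
  proof -
    have "integral {0..s} (q n) + integral {s..t} (q n) = integral {0..t} (q n)"
      using that by (intro Henstock_Kurzweil_Integration.integral_combine qsub) auto
    then have "Xn n t - Xn n s = integral {s..t} (q n)" by (simp add: Xn_def algebra_simps)
    also have "norm \<dots> \<le> integral {s..t} m"
      by (rule integral_norm_bound_integral[OF qsub integrable_on_subinterval[OF mi]]) (use that q_le in auto)
    also have "\<dots> = Mm t - Mm s" using Mm_diff[OF that] by simp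
    finally show ?thesis .
  qed
  have grid: "Xn n (real k * dl n) = p n k" if "real k * dl n \<le> T" for n k
    using that
  proof (induction k)
    case 0
    then show ?case by (simp add: Xn_def p0)
  next
    case (Suc k)
    define a where "a = real k * dl n"
    define c where "c = real (Suc k) * dl n"
    have ac: "0 \<le> a" "a \<le> c" "c \<le> T" using Suc.prems dl[of n] by (auto simp: a_def c_def)
    have IH: "Xn n a = p n k" using Suc.IH ac by (simp add: a_def)
    have "integral {0..a} (q n) + integral {a..c} (q n) = integral {0..c} (q n)"
      using ac by (intro Henstock_Kurzweil_Integration.integral_combine qsub) auto
    moreover have "integral {a..c} (q n) = integral {a..c} (\<lambda>s. bt (p n k) + st (p n k) *v h s)"
    proof (rule integral_spike[of "{c}"])
      show "negligible {c}" by simp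
      fix s assume s: "s \<in> {a..c} - {c}"
      have "kap n s = k"
      proof -
        have "real k \<le> s / dl n" "s / dl n < real k + 1"
          using s dl[of n] by (auto simp: a_def c_def field_simps)
        then have "\<lfloor>s / dl n\<rfloor> = int k" by (simp add: floor_eq_iff)
        then show ?thesis by (simp add: kap_def)
      qed
      then show "bt (p n k) + st (p n k) *v h s = q n s" by (simp add: q_def)
    qed
    ultimately have "Xn n c = Xn n a + integral {a..c} (\<lambda>s. bt (p n k) + st (p n k) *v h s)"
      by (simp add: Xn_def algebra_simps)
    then show ?case using IH pS[of n k] by (simp add: c_def a_def)
  qed
  have kap_props: "real (kap n s) * dl n \<le> s" "s - real (kap n s) * dl n < dl n"
    if "0 \<le> s" for n s
  proof -
    have fl: "real_of_int \<lfloor>s / dl n\<rfloor> \<le> s / dl n" "s / dl n < real_of_int \<lfloor>s / dl n\<rfloor> + 1"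
      by (simp_all add: of_int_floor_le)
    have "\<lfloor>s / dl n\<rfloor> \<ge> 0" using that dl[of n] by simp
    then have r: "real (kap n s) = real_of_int \<lfloor>s / dl n\<rfloor>" by (simp add: kap_def)
    have "real_of_int \<lfloor>s / dl n\<rfloor> * dl n \<le> s" using fl(1) dl[of n] by (simp add: le_divide_eq)
    then show "real (kap n s) * dl n \<le> s" unfolding r .
    have "s < (real_of_int \<lfloor>s / dl n\<rfloor> + 1) * dl n" using mult_strict_right_mono[OF fl(2) dl[of n]] dl[of n] by (simp add: less_imp_neq[symmetric])
    then show "s - real (kap n s) * dl n < dl n" unfolding r by (simp add: algebra_simps)
  qed
  have Y_close: "norm (p n (kap n s) - Xn n s) \<le> Mm s - Mm (real (kap n s) * dl n)"
    if "0 \<le> s" "s \<le> T" for n s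
  proof -
    have k1: "real (kap n s) * dl n \<le> s" using kap_props(1)[OF that(1)] .
    have k0: "0 \<le> real (kap n s) * dl n" using dl[of n] by simp
    have "p n (kap n s) = Xn n (real (kap n s) * dl n)" using grid[of "kap n s" n] k1 that by simp
    then have "norm (p n (kap n s) - Xn n s) = norm (Xn n s - Xn n (real (kap n s) * dl n))"
      by (simp add: norm_minus_commute)
    also have "\<dots> \<le> Mm s - Mm (real (kap n s) * dl n)" using Xn_diff[OF k0 k1 that(2)] .
    finally show ?thesis .
  qed
  define R0 where "R0 = norm x + Mm T"
  have Xn_bound: "norm (Xn n t) \<le> R0" if "t \<in> {0..T}" for n t
  proof -
    have "norm (Xn n t - Xn n 0) \<le> Mm t - Mm 0" using Xn_diff[of 0 t] that by auto
    moreover have "Xn n 0 = x" by (simp add: Xn_def)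
    moreover have "Mm t \<le> Mm T" using Mm_mono[of t T] that by auto
    ultimately have "norm (Xn n t - x) \<le> Mm T" using Mm0 by simp
    then show ?thesis unfolding R0_def by (metis add.commute norm_triangle_sub order_trans add_left_mono)
  qed
  have p_bound: "norm (p n (kap n s)) \<le> R0" if "s \<in> {0..T}" for n s
  proof -
    have "real (kap n s) * dl n \<le> s" using kap_props(1)[of s n] that by auto
    then have "p n (kap n s) = Xn n (real (kap n s) * dl n)" using grid[of "kap n s" n] that by simp
    moreover have "real (kap n s) * dl n \<in> {0..T}"
      using \<open>real (kap n s) * dl n \<le> s\<close> that dl[of n] by auto
    ultimately show ?thesis using Xn_bound by simp
  qed
  obtain Xl r where Xlc: "continuous_on {0..T} Xl" and r: "strict_mono (r :: nat \<Rightarrow> nat)"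
    and conv: "\<And>e. 0 < e \<Longrightarrow> \<exists>N. \<forall>n t. n \<ge> N \<and> t \<in> {0..T} \<longrightarrow> norm (Xn (r n) t - Xl t) < e"
  proof (rule Arzela_Ascoli[of "{0..T}" Xn R0])
    show "compact {0..T::real}" by simp
    show "norm (Xn n t) \<le> R0" if "t \<in> {0..T}" for n t using Xn_bound[OF that] .
    fix t and e :: real assume t: "t \<in> {0..T::real}" and e: "0 < e"
    obtain d where d: "d > 0" and dM: "\<And>t'. t' \<in> {0..T} \<Longrightarrow> dist t' t < d \<Longrightarrow> dist (Mm t') (Mm t) < e"
      using Mmc t e unfolding continuous_on_iff by metis
    show "\<exists>d>0. \<forall>n y. y \<in> {0..T} \<and> norm (t - y) < d \<longrightarrow> norm (Xn n t - Xn n y) < e"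
    proof (intro exI[of _ d] conjI allI impI d)
      fix n y assume y: "y \<in> {0..T} \<and> norm (t - y) < d"
      then have dd: "dist (Mm y) (Mm t) < e" using dM[of y] by (simp add: dist_real_def abs_minus_commute)
      show "norm (Xn n t - Xn n y) < e"
      proof (cases "y \<le> t")
        case True
        then have "norm (Xn n t - Xn n y) \<le> Mm t - Mm y" using Xn_diff[of y t] y t by auto
        then show ?thesis using dd by (simp add: dist_real_def)
      next
        case False
        then have "norm (Xn n y - Xn n t) \<le> Mm y - Mm t" using Xn_diff[of t y] y t by auto
        then show ?thesis using dd by (simp add: dist_real_def norm_minus_commute)
      qed
    qed
  qed blast
  have Xl_bound: "norm (Xl t) \<le> R0" if t: "t \<in> {0..T}" for t
  proof -
    have "(\<lambda>n. Xn (r n) t) \<longlonglongrightarrow> Xl t"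
    proof (rule LIMSEQ_I)
      fix e :: real assume "e > 0"
      then obtain N where "\<forall>n t. n \<ge> N \<and> t \<in> {0..T} \<longrightarrow> norm (Xn (r n) t - Xl t) < e"
        using conv by blast
      then show "\<exists>N. \<forall>n\<ge>N. norm (Xn (r n) t - Xl t) < e" using t by blast
    qed
    then show ?thesis
      by (rule tendsto_upperbound[OF tendsto_norm]) (use Xn_bound t in \<open>auto intro: always_eventually\<close>)
  qed
  define ql where "ql s = bt (Xl s) + st (Xl s) *v h s" for s
  have qlabs: "ql absolutely_integrable_on {0..T}"
    unfolding ql_def[abs_def] by (rule integrand_absint[OF cb cs h Xlc])
  have "uniformly_continuous_on {0..T} Mm" by (intro compact_uniformly_continuous Mmc) auto
  note MmU = this[unfolded uniformly_continuous_on_def]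
  have ubt: "uniformly_continuous_on (cball 0 R0) bt"
    by (intro compact_uniformly_continuous continuous_on_subset[OF cb]) auto
  have ust: "uniformly_continuous_on (cball 0 R0) st"
    by (intro compact_uniformly_continuous continuous_on_subset[OF cs]) auto
  show ?thesis
  proof (intro exI[of _ Xl] conjI Xlc ballI)
    fix t assume t: "t \<in> {0..T}"
    have t0: "0 \<le> t" "t \<le> T" using t by auto
    define I where "I = integral {0..t} (\<lambda>s. 1 + norm (h s))"
    have hsub: "(\<lambda>s. norm (h s)) integrable_on {0..t}" using t by (intro integrable_on_subinterval[OF nhi]) auto
    have Ii: "(\<lambda>s. 1 + norm (h s)) integrable_on {0..t}" using hsub by (intro integrable_add) auto
    have I0: "I \<ge> 0" unfolding I_def by (intro integral_nonneg Ii) auto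
    have qlt: "ql integrable_on {0..t}"
      using t by (intro integrable_on_subinterval[OF abs_int_integrable(1)[OF qlabs]]) auto
    have lim1: "(\<lambda>n. Xn (r n) t) \<longlonglongrightarrow> Xl t"
    proof (rule LIMSEQ_I)
      fix e :: real assume "e > 0"
      then obtain N where "\<forall>n t. n \<ge> N \<and> t \<in> {0..T} \<longrightarrow> norm (Xn (r n) t - Xl t) < e"
        using conv by blast
      then show "\<exists>N. \<forall>n\<ge>N. norm (Xn (r n) t - Xl t) < e" using t by blast
    qed
    have lim2: "(\<lambda>n. integral {0..t} (q (r n))) \<longlonglongrightarrow> integral {0..t} ql"
    proof (rule LIMSEQ_I)
      fix e :: real assume e: "e > 0"
      define \<epsilon> where "\<epsilon> = e / (2 * (I + 1))"
      have \<epsilon>: "\<epsilon> > 0" using e I0 by (simp add: \<epsilon>_def)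
      obtain \<rho> where \<rho>: "\<rho> > 0" and \<rho>b: "\<And>y z. y \<in> cball 0 R0 \<Longrightarrow> z \<in> cball 0 R0 \<Longrightarrow> dist z y < \<rho> \<Longrightarrow> dist (bt z) (bt y) < \<epsilon>"
        using ubt \<epsilon> unfolding uniformly_continuous_on_def by metis
      obtain \<rho>' where \<rho>': "\<rho>' > 0" and \<rho>s: "\<And>y z. y \<in> cball 0 R0 \<Longrightarrow> z \<in> cball 0 R0 \<Longrightarrow> dist z y < \<rho>' \<Longrightarrow> dist (st z) (st y) < \<epsilon>"
        using ust \<epsilon> unfolding uniformly_continuous_on_def by metis
      define \<rho>0 where "\<rho>0 = min \<rho> \<rho>'"
      have \<rho>0: "\<rho>0 > 0" using \<rho> \<rho>' by (simp add: \<rho>0_def)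
      obtain d where d: "d > 0" and dM: "\<And>s s'. s \<in> {0..T} \<Longrightarrow> s' \<in> {0..T} \<Longrightarrow> dist s' s < d \<Longrightarrow> dist (Mm s') (Mm s) < \<rho>0 / 2"
        using MmU \<rho>0 by (metis half_gt_zero)
      obtain N1 where N1: "T / d < real N1" using reals_Archimedean2 by blast
      obtain N2 where N2: "\<forall>n t. n \<ge> N2 \<and> t \<in> {0..T} \<longrightarrow> norm (Xn (r n) t - Xl t) < \<rho>0 / 2"
        using conv \<rho>0 by (metis half_gt_zero)
      show "\<exists>N. \<forall>n\<ge>N. norm (integral {0..t} (q (r n)) - integral {0..t} ql) < e"
      proof (intro exI[of _ "max N1 N2"] allI impI)
        fix n assume n: "max N1 N2 \<le> n"
        have rn: "n \<le> r n" using seq_suble[OF r] by simp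
        have dln: "dl (r n) < d"
        proof -
          have "T / d < real (Suc (r n))" using N1 n rn by linarith
          then show ?thesis using d T by (simp add: dl_def field_simps)
        qed
        have close: "norm (p (r n) (kap (r n) s) - Xl s) < \<rho>0" if s: "s \<in> {0..T}" for s
        proof -
          have s0: "0 \<le> s" "s \<le> T" using s by auto
          have k1: "real (kap (r n) s) * dl (r n) \<le> s" "s - real (kap (r n) s) * dl (r n) < dl (r n)"
            using kap_props[OF s0(1)] by auto
          have kT: "real (kap (r n) s) * dl (r n) \<in> {0..T}" using k1 s0 dl[of "r n"] by auto
          have "dist (Mm s) (Mm (real (kap (r n) s) * dl (r n))) < \<rho>0 / 2"
            using k1 dln by (intro dM kT s) (simp add: dist_real_def)
          then have a1: "norm (p (r n) (kap (r n) s) - Xn (r n) s) < \<rho>0 / 2"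
            using Y_close[OF s0, of "r n"] abs_ge_self[of "Mm s - Mm (real (kap (r n) s) * dl (r n))"]
            unfolding dist_real_def by linarith
          have a2: "norm (Xn (r n) s - Xl s) < \<rho>0 / 2" using N2 n s by auto
          have "norm (p (r n) (kap (r n) s) - Xl s) \<le> norm (p (r n) (kap (r n) s) - Xn (r n) s) + norm (Xn (r n) s - Xl s)"
            using norm_triangle_ineq[of "p (r n) (kap (r n) s) - Xn (r n) s" "Xn (r n) s - Xl s"] by simp
          then show ?thesis using a1 a2 by simp
        qed
        have pt: "norm (q (r n) s - ql s) \<le> \<epsilon> * (1 + norm (h s))" if s: "s \<in> {0..t}" for s
        proof -
          have sT: "s \<in> {0..T}" using s t by auto
          let ?y = "p (r n) (kap (r n) s)"
          have yb: "?y \<in> cball 0 R0" using p_bound[OF sT] by simp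
          have xb: "Xl s \<in> cball 0 R0" using Xl_bound[OF sT] by simp
          have c: "dist ?y (Xl s) < \<rho>0" using close[OF sT] by (simp add: dist_norm)
          have e1: "norm (bt ?y - bt (Xl s)) \<le> \<epsilon>"
            using \<rho>b[OF xb yb] c by (simp add: \<rho>0_def dist_norm)
          have e2: "norm (st ?y - st (Xl s)) \<le> \<epsilon>"
            using \<rho>s[OF xb yb] c by (simp add: \<rho>0_def dist_norm)
          have "q (r n) s - ql s = (bt ?y - bt (Xl s)) + (st ?y - st (Xl s)) *v h s"
            by (simp add: q_def ql_def matrix_vector_mult_diff_rdistrib)
          then have "norm (q (r n) s - ql s) \<le> norm (bt ?y - bt (Xl s)) + norm ((st ?y - st (Xl s)) *v h s)"
            by (simp add: norm_triangle_ineq)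
          also have "\<dots> \<le> \<epsilon> + \<epsilon> * norm (h s)"
            by (rule add_mono[OF e1 order_trans[OF norm_mat_vec_le mult_right_mono[OF e2 norm_ge_zero]]])
          finally show ?thesis by (simp add: algebra_simps)
        qed
        have "norm (integral {0..t} (q (r n)) - integral {0..t} ql) = norm (integral {0..t} (\<lambda>s. q (r n) s - ql s))"
          using integral_diff[OF qsub[OF order_refl t0(2)] qlt] by simp
        also have "\<dots> \<le> integral {0..t} (\<lambda>s. \<epsilon> * (1 + norm (h s)))"
          by (rule integral_norm_bound_integral[OF integrable_diff[OF qsub[OF order_refl t0(2)] qlt]])
             (use Ii integrable_on_cmult_left[OF Ii, where c = \<epsilon>] pt in auto)
        also have "\<dots> = \<epsilon> * I" using Ii by (simp add: I_def)
        also have "\<dots> < e"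
        proof -
          have "\<epsilon> * I = e * (I / (2 * (I + 1)))" by (simp add: \<epsilon>_def)
          also have "\<dots> < e * 1" using e I0 by (intro mult_strict_left_mono) (auto simp: field_simps)
          finally show ?thesis by simp
        qed
        finally show "norm (integral {0..t} (q (r n)) - integral {0..t} ql) < e" .
      qed
    qed
    have "(\<lambda>n. Xn (r n) t) \<longlonglongrightarrow> x + integral {0..t} ql"
      unfolding Xn_def by (intro tendsto_add tendsto_const lim2)
    then have "Xl t = x + integral {0..t} ql" using lim1 LIMSEQ_unique by blast
    then show "Xl t = x + integral {0..t} (\<lambda>s. bt (Xl s) + st (Xl s) *v h s)"
      by (simp add: ql_def[abs_def])
  qed
qed

lemma lyap_bound:
  fixes b :: "real^'d \<Rightarrow> real^'d" and \<sigma> :: "real^'d \<Rightarrow> real^'m^'d"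
  assumes A: "assumption_2_2 b \<sigma>"
  obtains V gV K0 where "\<And>y. (V has_derivative (\<lambda>v. gV y \<bullet> v)) (at y)" "continuous_on UNIV gV"
    "\<And>y. 0 \<le> V y" "filterlim V at_top at_infinity" "K0 > 0"
    "\<And>y k. gV y \<bullet> (b y + \<sigma> y *v k) \<le> K0 * (1 + V y) * (1 + (norm k)\<^sup>2)"
proof -
  obtain V gV HV \<theta> \<eta> C M where C2: "C2_with_grad_hess V gV HV" and Vnn: "\<forall>x. 0 \<le> V x"
    and pos: "0 < \<theta>" "0 < \<eta>" "0 < C" "0 < M"
    and lim: "filterlim V at_top at_infinity"
    and L1: "\<forall>x. b x \<bullet> gV x + \<theta> / 2 * trace (transpose (\<sigma> x) ** HV x ** \<sigma> x)
             + (norm (transpose (\<sigma> x) *v gV x))\<^sup>2 / (\<eta> * V x) \<le> C * (1 + V x)"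
    and L2: "\<forall>x. trace (transpose (\<sigma> x) ** HV x ** \<sigma> x) \<ge> - M - C * V x"
    using A unfolding assumption_2_2_def by blast
  have dV: "(V has_derivative (\<lambda>v. gV y \<bullet> v)) (at y)" for y
    using C2 unfolding C2_with_grad_hess_def by blast
  have dG: "(gV has_derivative (\<lambda>v. HV y *v v)) (at y)" for y
    using C2 unfolding C2_with_grad_hess_def by blast
  have gc: "continuous_on UNIV gV"
    using has_derivative_continuous[OF dG] by (simp add: continuous_at_imp_continuous_on)
  define K0 where "K0 = C + \<theta> / 2 * M + \<theta> / 2 * C + \<eta> / 4"
  have "\<theta> / 2 * M > 0" "\<theta> / 2 * C > 0" "\<eta> / 4 > 0" using pos by simp_all
  then have K0: "K0 > 0" using pos unfolding K0_def by linarith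
  show ?thesis
  proof (rule that[OF dV gc _ lim K0])
    show "0 \<le> V y" for y using Vnn by simp
    fix y :: "real^'d" and k :: "real^'m"
    define Tr where "Tr = trace (transpose (\<sigma> y) ** HV y ** \<sigma> y)"
    define u where "u = transpose (\<sigma> y) *v gV y"
    define Vy where "Vy = V y"
    define nk where "nk = norm k"
    define P where "P = (1 + Vy) * (1 + nk\<^sup>2)"
    have Vy0: "Vy \<ge> 0" using Vnn by (simp add: Vy_def)
    have nk0: "nk \<ge> 0" by (simp add: nk_def)
    have P1: "1 + Vy \<le> P" unfolding P_def using Vy0 by (simp add: algebra_simps)
    have P2: "Vy * nk\<^sup>2 \<le> P" unfolding P_def using Vy0 by (simp add: algebra_simps)
    have P3: "1 \<le> P" using P1 Vy0 by simp
    have P4: "Vy \<le> P" using P1 by simp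
    have split: "gV y \<bullet> (b y + \<sigma> y *v k) = b y \<bullet> gV y + u \<bullet> k"
      by (simp add: inner_add_right inner_commute u_def inner_mat_vec)
    have uk: "u \<bullet> k \<le> norm u * nk" unfolding nk_def
      by (rule order_trans[OF abs_ge_self Cauchy_Schwarz_ineq2])
    have l1: "b y \<bullet> gV y + \<theta> / 2 * Tr + (norm u)\<^sup>2 / (\<eta> * Vy) \<le> C * (1 + Vy)"
      using L1 by (simp add: Tr_def u_def Vy_def)
    have l2: "Tr \<ge> - M - C * Vy" using L2 by (simp add: Tr_def Vy_def)
    have l2': "- (\<theta> / 2 * Tr) \<le> \<theta> / 2 * M + \<theta> / 2 * C * Vy"
    proof -
      have "\<theta> / 2 * (- M - C * Vy) \<le> \<theta> / 2 * Tr" using l2 pos by (intro mult_left_mono) auto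
      then show ?thesis by (simp add: algebra_simps)
    qed
    have key: "gV y \<bullet> (b y + \<sigma> y *v k) \<le> C * (1 + Vy) + (\<theta> / 2 * M + \<theta> / 2 * C * Vy) + \<eta> / 4 * (Vy * nk\<^sup>2)"
    proof (cases "Vy = 0")
      case True
      have "eventually (\<lambda>z. V y \<le> V z) (at y)" using Vnn True by (simp add: Vy_def)
      then have "(\<lambda>v. gV y \<bullet> v) = (\<lambda>h. 0)" by (rule has_derivative_local_min[OF dV])
      then have "gV y \<bullet> gV y = 0" by meson
      then have "gV y = 0" by simp
      then have "gV y \<bullet> (b y + \<sigma> y *v k) = 0" by simp
      moreover have "C * (1 + Vy) + (\<theta> / 2 * M + \<theta> / 2 * C * Vy) + \<eta> / 4 * (Vy * nk\<^sup>2) \<ge> 0"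
        using pos Vy0 nk0 by (intro add_nonneg_nonneg mult_nonneg_nonneg) auto
      ultimately show ?thesis by simp
    next
      case False
      define c where "c = \<eta> * Vy"
      have c: "c > 0" using False Vy0 pos by (simp add: c_def)
      have am: "norm u * nk \<le> (norm u)\<^sup>2 / c + c / 4 * nk\<^sup>2"
      proof -
        define a where "a = norm u"
        have id: "(norm u)\<^sup>2 / c + c / 4 * nk\<^sup>2 - norm u * nk = (2 * a - c * nk)\<^sup>2 / (4 * c)"
          using c by (simp add: a_def field_simps power2_eq_square)
        have "(2 * a - c * nk)\<^sup>2 / (4 * c) \<ge> 0" using c by simp
        then show ?thesis using id by linarith
      qed
      have "gV y \<bullet> (b y + \<sigma> y *v k) \<le> b y \<bullet> gV y + ((norm u)\<^sup>2 / c + c / 4 * nk\<^sup>2)"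
        using split uk am by linarith
      moreover have "c / 4 * nk\<^sup>2 = \<eta> / 4 * (Vy * nk\<^sup>2)" by (simp add: c_def)
      ultimately show ?thesis using l1 l2' by (simp add: c_def)
    qed
    have t1: "C * (1 + Vy) \<le> C * P" using P1 pos by simp
    have t2: "\<theta> / 2 * M \<le> \<theta> / 2 * M * P" using P3 pos by simp
    have t3: "\<theta> / 2 * C * Vy \<le> \<theta> / 2 * C * P" using P4 pos by simp
    have t4: "\<eta> / 4 * (Vy * nk\<^sup>2) \<le> \<eta> / 4 * P" using P2 pos by simp
    have "K0 * P = C * P + \<theta> / 2 * M * P + \<theta> / 2 * C * P + \<eta> / 4 * P"
      by (simp add: K0_def algebra_simps)
    then have "gV y \<bullet> (b y + \<sigma> y *v k) \<le> K0 * P" using key t1 t2 t3 t4 by linarith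
    then show "gV y \<bullet> (b y + \<sigma> y *v k) \<le> K0 * (1 + V y) * (1 + (norm k)\<^sup>2)"
      by (simp add: P_def Vy_def nk_def mult.assoc)
  qed
qed

theorem proposition2p2:
  fixes b :: "real^'d \<Rightarrow> real^'d" and \<sigma> :: "real^'d \<Rightarrow> real^'m^'d"
  assumes "continuous_on UNIV b" and "continuous_on UNIV \<sigma>"
    and "assumption_2_1 b \<sigma>" and "assumption_2_2 b \<sigma>"
    and "T > 0" and "L2_on T h"
  shows "\<exists>X. skeleton_solution b \<sigma> h x T X \<and>
           (\<forall>Y. skeleton_solution b \<sigma> h x T Y \<longrightarrow> (\<forall>t\<in>{0..T}. Y t = X t))"
proof -
  note cb = assms(1) and cs = assms(2) and A1 = assms(3) and A2 = assms(4) and T = assms(5) and hL2 = assms(6)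
  obtain V gV K0 where dV: "\<And>y. (V has_derivative (\<lambda>v. gV y \<bullet> v)) (at y)" and gc: "continuous_on UNIV gV"
    and Vnn: "\<And>y. 0 \<le> V y" and Vlim: "filterlim V at_top at_infinity" and K0: "K0 > 0"
    and Lyap: "\<And>y k. gV y \<bullet> (b y + \<sigma> y *v k) \<le> K0 * (1 + V y) * (1 + (norm k)\<^sup>2)"
    using lyap_bound[OF A2] by blast
  have Vc: "continuous_on UNIV V"
    using has_derivative_continuous[OF dV] by (simp add: continuous_at_imp_continuous_on)
  have hsq: "(\<lambda>t. (norm (h t))\<^sup>2) absolutely_integrable_on {0..T}"
    and habs: "h absolutely_integrable_on {0..T}" using L2_facts[OF hL2] by auto
  define w where "w s = K0 + K0 * (norm (h s))\<^sup>2" for s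
  have wabs: "w absolutely_integrable_on {0..T}"
  proof -
    have "(\<lambda>s. K0) absolutely_integrable_on {0..T}"
      by (rule absolutely_integrable_integrable_bound[where g = "\<lambda>s. \<bar>K0\<bar>"]) auto
    moreover have "(\<lambda>s. K0 * (norm (h s))\<^sup>2) absolutely_integrable_on {0..T}"
      using set_integrable_mult_right[OF hsq, of K0] by simp
    ultimately show ?thesis unfolding w_def[abs_def] by (rule set_integral_add(1))
  qed
  have wnn: "w s \<ge> 0" for s using K0 by (simp add: w_def)
  have wi: "w integrable_on {0..T}" using abs_int_integrable(1)[OF wabs] .
  have wint_mono: "integral {0..u} w \<le> integral {0..T} w" if "u \<in> {0..T}" for u
  proof -
    have "integral {0..u} w + integral {u..T} w = integral {0..T} w"
      using that by (intro Henstock_Kurzweil_Integration.integral_combine wi) auto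
    moreover have "integral {u..T} w \<ge> 0"
      using that wnn by (intro integral_nonneg integrable_on_subinterval[OF wi]) auto
    ultimately show ?thesis by linarith
  qed
  define B where "B = (1 + V x) * exp (integral {0..T} w)"
  have B: "1 + V x \<le> B"
  proof -
    have "integral {0..T} w \<ge> 0" using wnn by (intro integral_nonneg wi) auto
    then have "exp (integral {0..T} w) \<ge> 1" by simp
    then show ?thesis unfolding B_def using Vnn[of x] by (simp add: mult_le_cancel_left1)
  qed
  obtain r0 where r0: "\<And>y. r0 \<le> norm y \<Longrightarrow> B + 1 \<le> V y"
    using Vlim unfolding filterlim_at_top eventually_at_infinity by blast
  define R where "R = max r0 1"
  have R: "R > 0" by (simp add: R_def)
  have VR: "norm y < R" if "V y \<le> B" for y
  proof (rule ccontr)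
    assume "\<not> norm y < R"
    then have "r0 \<le> norm y" by (simp add: R_def)
    then show False using r0[of y] that by simp
  qed
  have xR: "norm x < R" using VR[of x] B by simp
  define pr where "pr = closest_point (cball (0::real^'d) R)"
  have prc: "continuous_on UNIV pr"
    unfolding pr_def using R by (intro continuous_on_closest_point) auto
  have prin: "pr y \<in> cball 0 R" for y
    unfolding pr_def using R by (intro closest_point_in_set) auto
  have prid: "pr y = y" if "norm y \<le> R" for y
    unfolding pr_def using that by (intro closest_point_self) simp
  define bt where "bt = b \<circ> pr"
  define st where "st = \<sigma> \<circ> pr"
  have cbt: "continuous_on UNIV bt" unfolding bt_def
    by (rule continuous_on_compose[OF prc continuous_on_subset[OF cb]]) auto
  have cst: "continuous_on UNIV st" unfolding st_def
    by (rule continuous_on_compose[OF prc continuous_on_subset[OF cs]]) auto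
  have "bounded (b ` cball 0 R)"
    by (intro compact_imp_bounded compact_continuous_image continuous_on_subset[OF cb]) auto
  then obtain Kb where Kb: "\<And>y. y \<in> cball 0 R \<Longrightarrow> norm (b y) \<le> Kb"
    unfolding bounded_iff by blast
  have "bounded (\<sigma> ` cball 0 R)"
    by (intro compact_imp_bounded compact_continuous_image continuous_on_subset[OF cs]) auto
  then obtain Ks where Ks: "\<And>y. y \<in> cball 0 R \<Longrightarrow> norm (\<sigma> y) \<le> Ks"
    unfolding bounded_iff by blast
  have Kbt: "norm (bt y) \<le> Kb" for y unfolding bt_def using Kb[OF prin] by simp
  have Kst: "norm (st y) \<le> Ks" for y unfolding st_def using Ks[OF prin] by simp
  obtain X where Xc: "continuous_on {0..T} X"
    and Xe: "\<And>t. t \<in> {0..T} \<Longrightarrow> X t = x + integral {0..t} (\<lambda>s. bt (X s) + st (X s) *v h s)"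
    using trunc_exist[OF cbt cst Kbt Kst habs T, of x] by blast
  have X0: "X 0 = x" using Xe[of 0] T by simp
  define f where "f s = b (X s) + \<sigma> (X s) *v h s" for s
  have fabs: "f absolutely_integrable_on {0..u}" if "u \<in> {0..T}" for u
    unfolding f_def[abs_def] using that
    by (intro integrand_absint[OF cb cs abs_int_sub[OF habs] continuous_on_subset[OF Xc]]) auto
  \<comment> \<open>the truncated solution stays inside the ball\<close>
  have inside: "norm (X t) < R" if t: "t \<in> {0..T}" for t
  proof (rule ccontr)
    assume "\<not> norm (X t) < R"
    define S where "S = {s \<in> {0..T}. R \<le> norm (X s)}"
    have Sne: "S \<noteq> {}" using t \<open>\<not> norm (X t) < R\<close> by (auto simp: S_def)
    have Sbdd: "bdd_below S" by (auto simp: S_def bdd_below_def)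
    have Scl: "closed S"
    proof -
      have "closed ({0..T} \<inter> (\<lambda>s. norm (X s)) -` {R..})"
        by (intro continuous_closed_preimage continuous_on_norm Xc) auto
      moreover have "{0..T} \<inter> (\<lambda>s. norm (X s)) -` {R..} = S" by (auto simp: S_def)
      ultimately show ?thesis by simp
    qed
    define \<tau> where "\<tau> = Inf S"
    have \<tau>S: "\<tau> \<in> S" unfolding \<tau>_def by (rule closed_contains_Inf[OF Sne Sbdd Scl])
    have \<tau>T: "\<tau> \<in> {0..T}" and \<tau>R: "R \<le> norm (X \<tau>)" using \<tau>S by (auto simp: S_def)
    have before: "norm (X s) < R" if "s \<in> {0..T}" "s < \<tau>" for s
    proof (rule ccontr)
      assume "\<not> norm (X s) < R"
      then have "s \<in> S" using that by (auto simp: S_def)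
      then have "\<tau> \<le> s" unfolding \<tau>_def by (rule cInf_lower[OF _ Sbdd])
      then show False using that by simp
    qed
    have \<tau>0: "\<tau> > 0"
    proof (rule ccontr)
      assume "\<not> \<tau> > 0"
      then have "\<tau> = 0" using \<tau>T by simp
      then show False using \<tau>R X0 xR by simp
    qed
    have inR: "norm (X s) \<le> R" if s: "s \<in> {0..\<tau>}" for s
    proof (cases "s < \<tau>")
      case True then show ?thesis using before[of s] s \<tau>T by auto
    next
      case False
      then have s\<tau>: "s = \<tau>" using s by simp
      have "continuous_on (closure {0..<\<tau>}) X"
        using \<tau>0 \<tau>T by (simp add: continuous_on_subset[OF Xc])
      moreover have "\<forall>y\<in>{0..<\<tau>}. norm (X y) \<le> R" using before \<tau>T by (auto simp: less_imp_le)
      moreover have "\<tau> \<in> closure {0..<\<tau>}" using \<tau>0 by simp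
      ultimately show ?thesis unfolding s\<tau> by (rule continuous_on_closure_norm_le)
    qed
    have sub: "{0..\<tau>} \<subseteq> {0..T}" using \<tau>T by auto
    have Xeq: "X s = x + integral {0..s} f" if s: "s \<in> {0..\<tau>}" for s
    proof -
      have "integral {0..s} (\<lambda>r. bt (X r) + st (X r) *v h r) = integral {0..s} f"
      proof (rule integral_cong)
        fix r assume "r \<in> {0..s}"
        then have "norm (X r) \<le> R" using s by (intro inR) auto
        then show "bt (X r) + st (X r) *v h r = f r" by (simp add: bt_def st_def f_def prid)
      qed
      then show ?thesis using Xe[of s] s sub by auto
    qed
    have f\<tau>: "f absolutely_integrable_on {0..\<tau>}" using fabs \<tau>T by simp
    note CR = chain_rule_AC[where F = V and G = gV and x = x, OF dV gc f\<tau>]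
    define phi where "phi s = 1 + V (X s)" for s
    have phic: "continuous_on {0..\<tau>} phi"
      unfolding phi_def[abs_def]
      by (intro continuous_intros continuous_on_compose2[OF Vc continuous_on_subset[OF Xc sub]]) auto
    have phile: "phi s \<le> (1 + V x) + integral {0..s} (\<lambda>r. w r * phi r)" if s: "s \<in> {0..\<tau>}" for s
    proof -
      have e1: "V (X s) = V x + integral {0..s} (\<lambda>r. gV (X r) \<bullet> f r)"
      proof -
        have "V (x + integral {0..s} f) = V x + integral {0..s} (\<lambda>r. gV (x + integral {0..r} f) \<bullet> f r)"
          using CR(2)[OF s] .
        also have "integral {0..s} (\<lambda>r. gV (x + integral {0..r} f) \<bullet> f r) = integral {0..s} (\<lambda>r. gV (X r) \<bullet> f r)"
          by (rule integral_cong) (use s in \<open>auto simp: Xeq\<close>)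
        finally show ?thesis using Xeq[OF s] by simp
      qed
      have i1: "(\<lambda>r. gV (X r) \<bullet> f r) integrable_on {0..s}"
      proof -
        have "(\<lambda>r. gV (x + integral {0..r} f) \<bullet> f r) integrable_on {0..s}"
          using abs_int_integrable(1)[OF CR(1)[OF s]] .
        then show ?thesis by (rule integrable_eq) (use s in \<open>auto simp: Xeq\<close>)
      qed
      have i2: "(\<lambda>r. w r * phi r) integrable_on {0..s}"
        using s abs_int_integrable(1)[OF cont_times_abs_int[OF continuous_on_subset[OF phic] abs_int_sub[OF wabs]]]
        \<tau>T by auto
      have "integral {0..s} (\<lambda>r. gV (X r) \<bullet> f r) \<le> integral {0..s} (\<lambda>r. w r * phi r)"
      proof (rule integral_le[OF i1 i2])
        fix r assume "r \<in> {0..s}"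
        have "gV (X r) \<bullet> f r \<le> K0 * (1 + V (X r)) * (1 + (norm (h r))\<^sup>2)"
          unfolding f_def by (rule Lyap)
        also have "\<dots> = w r * phi r" by (simp add: w_def phi_def algebra_simps)
        finally show "gV (X r) \<bullet> f r \<le> w r * phi r" .
      qed
      then show ?thesis using e1 by (simp add: phi_def)
    qed
    have "phi \<tau> \<le> (1 + V x) * exp (integral {0..\<tau>} w)"
      by (rule gronwall_exp[OF phic abs_int_sub[OF wabs sub] _ _ phile]) (use wnn Vnn \<tau>0 in \<open>auto intro: add_nonneg_nonneg\<close>)
    also have "\<dots> \<le> B"
      unfolding B_def using wint_mono[OF \<tau>T] Vnn[of x] by (intro mult_left_mono) auto
    finally have "V (X \<tau>) \<le> B" by (simp add: phi_def)
    then have "norm (X \<tau>) < R" by (rule VR)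
    then show False using \<tau>R by simp
  qed
  have Xsol: "X t = x + integral {0..t} f" if t: "t \<in> {0..T}" for t
  proof -
    have "integral {0..t} (\<lambda>r. bt (X r) + st (X r) *v h r) = integral {0..t} f"
    proof (rule integral_cong)
      fix r assume "r \<in> {0..t}"
      then have "norm (X r) \<le> R" using t inside[of r] by auto
      then show "bt (X r) + st (X r) *v h r = f r" by (simp add: bt_def st_def f_def prid)
    qed
    then show ?thesis using Xe[OF t] by simp
  qed
  have skel: "skeleton_solution b \<sigma> h x T X"
    unfolding skeleton_solution_def
  proof (intro conjI Xc ballI)
    fix t assume t: "t \<in> {0..T}"
    show "set_integrable lebesgue {0..t} (\<lambda>s. b (X s) + \<sigma> (X s) *v h s)"
      using fabs[OF t] by (simp add: f_def[abs_def])
    show "X t = x + (LINT s:{0..t}|lebesgue. b (X s) + \<sigma> (X s) *v h s)"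
      using Xsol[OF t] set_lebesgue_integral_eq_integral(2)[OF fabs[OF t]] by (simp add: f_def[abs_def])
  qed
  show ?thesis
  proof (intro exI[of _ X] conjI skel allI impI ballI)
    fix Y t assume Y: "skeleton_solution b \<sigma> h x T Y" and t: "t \<in> {0..T}"
    have Yc: "continuous_on {0..T} Y" and Ye0: "\<forall>t\<in>{0..T}. set_integrable lebesgue {0..t} (\<lambda>s. b (Y s) + \<sigma> (Y s) *v h s) \<and>
        Y t = x + (LINT s:{0..t}|lebesgue. b (Y s) + \<sigma> (Y s) *v h s)"
      using Y unfolding skeleton_solution_def by auto
    have YT: "(\<lambda>s. b (Y s) + \<sigma> (Y s) *v h s) absolutely_integrable_on {0..T}" using Ye0 T by auto
    have Ye: "Y t' = x + integral {0..t'} (\<lambda>s. b (Y s) + \<sigma> (Y s) *v h s)" if "t' \<in> {0..T}" for t'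
    proof -
      have "set_integrable lebesgue {0..t'} (\<lambda>s. b (Y s) + \<sigma> (Y s) *v h s) \<and>
        Y t' = x + (LINT s:{0..t'}|lebesgue. b (Y s) + \<sigma> (Y s) *v h s)" (is "?A \<and> ?B") using Ye0 that by blast
      then have cA: ?A and cB: ?B by auto
      show ?thesis using set_lebesgue_integral_eq_integral(2)[OF cA] cB by simp
    qed
    have XT: "(\<lambda>s. b (X s) + \<sigma> (X s) *v h s) absolutely_integrable_on {0..T}"
      using fabs[of T] T by (simp add: f_def[abs_def])
    have Xe': "X t' = x + integral {0..t'} (\<lambda>s. b (X s) + \<sigma> (X s) *v h s)" if "t' \<in> {0..T}" for t'
      using Xsol[OF that] by (simp add: f_def[abs_def])
    show "Y t = X t"
      by (rule uniqueness[OF cb cs A1 hL2 Xc Yc XT YT Xe' Ye t])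
  qed
qed

end
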